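(* Let $k\ge 0$. For all finite structures $\mathcal A_1,\mathcal A_2,\mathcal B_1,\mathcal B_2$ over the same vocabulary, if $\mathrm{Th}^k_{\mathrm{inv}(\mathrm{FO}+<)}(\mathcal A_1)=\mathrm{Th}^k_{\mathrm{inv}(\mathrm{FO}+<)}(\mathcal A_2)$ and $\mathrm{Th}^k_{\mathrm{inv}(\mathrm{FO}+<)}(\mathcal B_1)=\mathrm{Th}^k_{\mathrm{inv}(\mathrm{FO}+<)}(\mathcal B_2)$, then $\mathrm{Th}^k_{\mathrm{inv}(\mathrm{FO}+<)}(\mathcal A_1\sqcup\mathcal B_1)=\mathrm{Th}^k_{\mathrm{inv}(\mathrm{FO}+<)}(\mathcal A_2\sqcup\mathcal B_2)$ and $\mathrm{Th}^k_{\mathrm{inv}(\mathrm{FO}+<)}(\mathcal A_1\times\mathcal B_1)=\mathrm{Th}^k_{\mathrm{inv}(\mathrm{FO}+<)}(\mathcal A_2\times\mathcal B_2)$. That is, the rank-$k$ $<$-invariant FO theories of $\mathcal A\sqcup\mathcal B$ and of $\mathcal A\times\mathcal B$ are uniquely determined by those of $\mathcal A$ and $\mathcal B$.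
   Context: All structures are finite. An FO sentence $\varphi$ over a vocabulary $\tau$ extended with a fresh binary symbol $<$ is $<$-invariant if for every finite $\tau$-structure $\mathcal M$ and any two linear orders $<_1,<_2$ on $\mathrm{dom}(\mathcal M)$, $(\mathcal M,<_1)\models\varphi$ iff $(\mathcal M,<_2)\models\varphi$; then $\varphi$ is true in $\mathcal M$ if $(\mathcal M,<)\models\varphi$ for some (equivalently every) linear order. $\mathrm{Th}^k_{\mathrm{inv}(\mathrm{FO}+<)}(\mathcal M)$ is the set of all $<$-invariant FO sentences of quantifier rank at most $k$ true in $\mathcal M$. $\mathcal A\times\mathcal B$ is the direct product (domain $\mathrm{dom}(\mathcal A)\times\mathrm{dom}(\mathcal B)$, each relation holding of a tuple of pairs iff it holds componentwise in $\mathcal A$ and in $\mathcal B$). $\mathcal A\sqcup\mathcal B$ is the disjoint union, with the vocabulary augmented by two unary predicates naming the universes of $\mathcal A$ and of $\mathcal B$. *)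

theory Defs
  imports Main
begin

text \<open>A relational vocabulary with symbols of type 's is given by an arity
function ar :: 's => nat. Formulas over the vocabulary extended with a fresh
binary symbol < (constructor Lt).\<close>

datatype 's fm =
    Atom 's "nat list"
  | Eq nat nat
  | Lt nat nat
  | Neg "'s fm"
  | Conj "'s fm" "'s fm"
  | Disj "'s fm" "'s fm"
  | Ex nat "'s fm"
  | All nat "'s fm"

fun fv :: "'s fm \<Rightarrow> nat set" where
  "fv (Atom s xs) = set xs"
| "fv (Eq i j) = {i, j}"
| "fv (Lt i j) = {i, j}"
| "fv (Neg p) = fv p"
| "fv (Conj p q) = fv p \<union> fv q"
| "fv (Disj p q) = fv p \<union> fv q"
| "fv (Ex x p) = fv p - {x}"
| "fv (All x p) = fv p - {x}"

fun qr :: "'s fm \<Rightarrow> nat" where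
  "qr (Atom s xs) = 0"
| "qr (Eq i j) = 0"
| "qr (Lt i j) = 0"
| "qr (Neg p) = qr p"
| "qr (Conj p q) = max (qr p) (qr q)"
| "qr (Disj p q) = max (qr p) (qr q)"
| "qr (Ex x p) = Suc (qr p)"
| "qr (All x p) = Suc (qr p)"

fun wf_fm :: "('s \<Rightarrow> nat) \<Rightarrow> 's fm \<Rightarrow> bool" where
  "wf_fm ar (Atom s xs) = (length xs = ar s)"
| "wf_fm ar (Eq i j) = True"
| "wf_fm ar (Lt i j) = True"
| "wf_fm ar (Neg p) = wf_fm ar p"
| "wf_fm ar (Conj p q) = (wf_fm ar p \<and> wf_fm ar q)"
| "wf_fm ar (Disj p q) = (wf_fm ar p \<and> wf_fm ar q)"
| "wf_fm ar (Ex x p) = wf_fm ar p"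
| "wf_fm ar (All x p) = wf_fm ar p"

definition sentence :: "'s fm \<Rightarrow> bool" where
  "sentence p \<longleftrightarrow> fv p = {}"

type_synonym ('s, 'a) struct = "'a set \<times> ('s \<Rightarrow> 'a list set)"

definition dom_of :: "('s, 'a) struct \<Rightarrow> 'a set" where
  "dom_of M = fst M"

definition rel_of :: "('s, 'a) struct \<Rightarrow> 's \<Rightarrow> 'a list set" where
  "rel_of M = snd M"

definition is_struct :: "('s \<Rightarrow> nat) \<Rightarrow> ('s, 'a) struct \<Rightarrow> bool" where
  "is_struct ar M \<longleftrightarrow> finite (dom_of M) \<and> dom_of M \<noteq> {} \<and>
     (\<forall>s. \<forall>t \<in> rel_of M s. length t = ar s \<and> set t \<subseteq> dom_of M)"

definition lin_order :: "'a set \<Rightarrow> 'a rel \<Rightarrow> bool" where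
  "lin_order D R \<longleftrightarrow> R \<subseteq> D \<times> D \<and> strict_linear_order_on D R"

fun eval :: "('s, 'a) struct \<Rightarrow> 'a rel \<Rightarrow> (nat \<Rightarrow> 'a) \<Rightarrow> 's fm \<Rightarrow> bool" where
  "eval M R e (Atom s xs) = (map e xs \<in> rel_of M s)"
| "eval M R e (Eq i j) = (e i = e j)"
| "eval M R e (Lt i j) = ((e i, e j) \<in> R)"
| "eval M R e (Neg p) = (\<not> eval M R e p)"
| "eval M R e (Conj p q) = (eval M R e p \<and> eval M R e q)"
| "eval M R e (Disj p q) = (eval M R e p \<or> eval M R e q)"
| "eval M R e (Ex x p) = (\<exists>a \<in> dom_of M. eval M R (e(x := a)) p)"
| "eval M R e (All x p) = (\<forall>a \<in> dom_of M. eval M R (e(x := a)) p)"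

definition holds :: "('s, 'a) struct \<Rightarrow> 'a rel \<Rightarrow> 's fm \<Rightarrow> bool" where
  "holds M R p \<longleftrightarrow> (\<forall>e. (\<forall>i. e i \<in> dom_of M) \<longrightarrow> eval M R e p)"

text \<open>Order invariance: quantifying over all finite structures whose universe
is a subset of nat (every finite structure is isomorphic to one of these).\<close>
definition ord_inv :: "('s \<Rightarrow> nat) \<Rightarrow> 's fm \<Rightarrow> bool" where
  "ord_inv ar p \<longleftrightarrow>
     (\<forall>M :: ('s, nat) struct. is_struct ar M \<longrightarrow>
       (\<forall>R1 R2. lin_order (dom_of M) R1 \<longrightarrow> lin_order (dom_of M) R2 \<longrightarrow>
          (holds M R1 p \<longleftrightarrow> holds M R2 p)))"

definition Th_inv :: "nat \<Rightarrow> ('s \<Rightarrow> nat) \<Rightarrow> ('s, 'a) struct \<Rightarrow> 's fm set" where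
  "Th_inv k ar M = {p. wf_fm ar p \<and> sentence p \<and> qr p \<le> k \<and> ord_inv ar p \<and>
      (\<exists>R. lin_order (dom_of M) R \<and> holds M R p)}"

text \<open>Vocabulary of the disjoint union: the old symbols (Inl) plus two unary
predicates Inr True (universe of A) and Inr False (universe of B).\<close>
definition ar_du :: "('s \<Rightarrow> nat) \<Rightarrow> 's + bool \<Rightarrow> nat" where
  "ar_du ar s = (case s of Inl r \<Rightarrow> ar r | Inr _ \<Rightarrow> 1)"

definition disj_union :: "('s, 'a) struct \<Rightarrow> ('s, 'b) struct \<Rightarrow> ('s + bool, 'a + 'b) struct" where
  "disj_union A B =
    (Inl ` dom_of A \<union> Inr ` dom_of B,
     (\<lambda>s. case s of
            Inl r \<Rightarrow> map Inl ` rel_of A r \<union> map Inr ` rel_of B r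
          | Inr True \<Rightarrow> {[Inl a] | a. a \<in> dom_of A}
          | Inr False \<Rightarrow> {[Inr b] | b. b \<in> dom_of B}))"

definition direct_prod :: "('s, 'a) struct \<Rightarrow> ('s, 'b) struct \<Rightarrow> ('s, 'a \<times> 'b) struct" where
  "direct_prod A B =
    (dom_of A \<times> dom_of B,
     (\<lambda>r. {t. map fst t \<in> rel_of A r \<and> map snd t \<in> rel_of B r}))"

end

theory Submission
  imports Defs
begin


definition pi :: "('s,'a) struct \<Rightarrow> 'a rel \<Rightarrow> 'a list \<Rightarrow> ('s,'b) struct \<Rightarrow> 'b rel \<Rightarrow> 'b list \<Rightarrow> bool" where
  "pi M R as N R' bs \<longleftrightarrow> length as = length bs \<and> set as \<subseteq> dom_of M \<and> set bs \<subseteq> dom_of N \<and>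
     (\<forall>i<length as. \<forall>j<length as. (as!i = as!j \<longleftrightarrow> bs!i = bs!j) \<and> ((as!i, as!j) \<in> R \<longleftrightarrow> (bs!i, bs!j) \<in> R')) \<and>
     (\<forall>s is. set is \<subseteq> {..<length as} \<longrightarrow> (map ((!) as) is \<in> rel_of M s \<longleftrightarrow> map ((!) bs) is \<in> rel_of N s))"

fun ef :: "nat \<Rightarrow> ('s,'a) struct \<Rightarrow> 'a rel \<Rightarrow> 'a list \<Rightarrow> ('s,'b) struct \<Rightarrow> 'b rel \<Rightarrow> 'b list \<Rightarrow> bool" where
  "ef 0 M R as N R' bs = pi M R as N R' bs"
| "ef (Suc k) M R as N R' bs = (pi M R as N R' bs \<and>
     (\<forall>a\<in>dom_of M. \<exists>b\<in>dom_of N. ef k M R (as@[a]) N R' (bs@[b])) \<and>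
     (\<forall>b\<in>dom_of N. \<exists>a\<in>dom_of M. ef k M R (as@[a]) N R' (bs@[b])))"

lemma ef_pi: "ef k M R as N R' bs \<Longrightarrow> pi M R as N R' bs"
  by (cases k) auto

lemma pi_sym: "pi M R as N R' bs \<Longrightarrow> pi N R' bs M R as"
  unfolding pi_def by auto

lemma ef_sym: "ef k M R as N R' bs \<Longrightarrow> ef k N R' bs M R as"
  by (induction k arbitrary: as bs) (auto simp: pi_sym, blast+)

lemma ef_mono: "ef (Suc k) M R as N R' bs \<Longrightarrow> ef k M R as N R' bs"
proof (induction k arbitrary: as bs)
  case 0 thus ?case by simp
next
  case (Suc k)
  have "ef (Suc (Suc k)) M R as N R' bs" by fact
  then have all: "pi M R as N R' bs \<and> (\<forall>a\<in>dom_of M. \<exists>b\<in>dom_of N. ef (Suc k) M R (as@[a]) N R' (bs@[b])) \<and> (\<forall>b\<in>dom_of N. \<exists>a\<in>dom_of M. ef (Suc k) M R (as@[a]) N R' (bs@[b]))"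
    unfolding ef.simps(2)[of "Suc k"] .
  then have pi: "pi M R as N R' bs"
    and F: "\<forall>a\<in>dom_of M. \<exists>b\<in>dom_of N. ef (Suc k) M R (as@[a]) N R' (bs@[b])"
    and B: "\<forall>b\<in>dom_of N. \<exists>a\<in>dom_of M. ef (Suc k) M R (as@[a]) N R' (bs@[b])"
    by blast+
  have F': "\<forall>a\<in>dom_of M. \<exists>b\<in>dom_of N. ef k M R (as@[a]) N R' (bs@[b])"
    using F Suc.IH by blast
  have B': "\<forall>b\<in>dom_of N. \<exists>a\<in>dom_of M. ef k M R (as@[a]) N R' (bs@[b])"
    using B Suc.IH by blast
  show ?case using pi F' B' by (simp only: ef.simps(2)[of k])
qed

lemma eval_cong: "(\<forall>v\<in>fv p. e v = e' v) \<Longrightarrow> eval M R e p = eval M R e' p"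
proof (induction p arbitrary: e e')
  case (Atom s xs) then show ?case by (auto intro!: arg_cong[where f="\<lambda>t. t \<in> _"] map_cong)
next
  case (Ex x p)
  have "\<And>a. eval M R (e(x:=a)) p = eval M R (e'(x:=a)) p" using Ex by (intro Ex.IH) auto
  then show ?case by simp
next
  case (All x p)
  have "\<And>a. eval M R (e(x:=a)) p = eval M R (e'(x:=a)) p" using All by (intro All.IH) auto
  then show ?case by simp
next
  case (Conj p q)
  have "eval M R e p = eval M R e' p" by (rule Conj.IH(1)) (use Conj.prems in auto)
  moreover have "eval M R e q = eval M R e' q" by (rule Conj.IH(2)) (use Conj.prems in auto)
  ultimately show ?case by simp
next
  case (Disj p q)
  have "eval M R e p = eval M R e' p" by (rule Disj.IH(1)) (use Disj.prems in auto)
  moreover have "eval M R e q = eval M R e' q" by (rule Disj.IH(2)) (use Disj.prems in auto)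
  ultimately show ?case by simp
qed auto

lemma lemmaA:
  "ef k M R as N R' bs \<Longrightarrow> qr p \<le> k \<Longrightarrow>
   (\<forall>v\<in>fv p. f v < length as \<and> e v = as!(f v) \<and> e' v = bs!(f v)) \<Longrightarrow>
   eval M R e p = eval N R' e' p"
proof (induction p arbitrary: k e e' f as bs)
  case (Atom s xs)
  have pi: "pi M R as N R' bs" using Atom ef_pi by blast
  have 1: "map e xs = map ((!) as) (map f xs)" and 2: "map e' xs = map ((!) bs) (map f xs)"
    using Atom.prems(3) by auto
  have "set (map f xs) \<subseteq> {..<length as}" using Atom.prems(3) by auto
  then show ?case using pi unfolding pi_def by (simp only: eval.simps 1 2)
next
  case (Eq i j)
  have pi: "pi M R as N R' bs" using Eq ef_pi by blast
  then show ?case using Eq.prems(3) unfolding pi_def by auto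
next
  case (Lt i j)
  have pi: "pi M R as N R' bs" using Lt ef_pi by blast
  then show ?case using Lt.prems(3) unfolding pi_def by auto
next
  case (Neg p) then show ?case by (metis eval.simps(4) fv.simps(4) qr.simps(4))
next
  case (Conj p q) then show ?case by (simp (no_asm)) (metis (no_types, lifting) UnCI fv.simps(5) max.bounded_iff qr.simps(5))
next
  case (Disj p q) then show ?case by (simp (no_asm)) (metis (no_types, lifting) UnCI fv.simps(6) max.bounded_iff qr.simps(6))
next
  case (Ex x p)
  then obtain k' where k: "k = Suc k'" and qk: "qr p \<le> k'" by (cases k) auto
  have efk: "ef (Suc k') M R as N R' bs" using Ex k by simp
  have len: "length as = length bs" using efk ef_pi pi_def by blast
  have step: "eval M R (e(x:=a)) p = eval N R' (e'(x:=b)) p"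
    if "ef k' M R (as@[a]) N R' (bs@[b])" for a b
  proof (rule Ex.IH[OF that qk])
    show "\<forall>v\<in>fv p. (f(x:=length as)) v < length (as@[a]) \<and> (e(x:=a)) v = (as@[a])!((f(x:=length as)) v)
         \<and> (e'(x:=b)) v = (bs@[b])!((f(x:=length as)) v)"
    proof
      fix v assume v: "v \<in> fv p"
      show "(f(x:=length as)) v < length (as@[a]) \<and> (e(x:=a)) v = (as@[a])!((f(x:=length as)) v)
         \<and> (e'(x:=b)) v = (bs@[b])!((f(x:=length as)) v)"
      proof (cases "v = x")
        case True then show ?thesis using len by (auto simp: nth_append)
      next
        case False
        then have "v \<in> fv (Ex x p)" using v by simp
        then have "f v < length as \<and> e v = as!(f v) \<and> e' v = bs!(f v)" using Ex.prems(3) by blast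
        then show ?thesis using len False by (auto simp: nth_append)
      qed
    qed
  qed
  show ?case
  proof
    assume "eval M R e (Ex x p)"
    then obtain a where a: "a \<in> dom_of M" "eval M R (e(x:=a)) p" by auto
    then obtain b where "b \<in> dom_of N" "ef k' M R (as@[a]) N R' (bs@[b])" using efk by auto
    then show "eval N R' e' (Ex x p)" using step a by auto
  next
    assume "eval N R' e' (Ex x p)"
    then obtain b where b: "b \<in> dom_of N" "eval N R' (e'(x:=b)) p" by auto
    then obtain a where "a \<in> dom_of M" "ef k' M R (as@[a]) N R' (bs@[b])" using efk by auto
    then show "eval M R e (Ex x p)" using step b by auto
  qed
next
  case (All x p)
  then obtain k' where k: "k = Suc k'" and qk: "qr p \<le> k'" by (cases k) auto
  have efk: "ef (Suc k') M R as N R' bs" using All k by simp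
  have len: "length as = length bs" using efk ef_pi pi_def by blast
  have step: "eval M R (e(x:=a)) p = eval N R' (e'(x:=b)) p"
    if "ef k' M R (as@[a]) N R' (bs@[b])" for a b
  proof (rule All.IH[OF that qk])
    show "\<forall>v\<in>fv p. (f(x:=length as)) v < length (as@[a]) \<and> (e(x:=a)) v = (as@[a])!((f(x:=length as)) v)
         \<and> (e'(x:=b)) v = (bs@[b])!((f(x:=length as)) v)"
    proof
      fix v assume v: "v \<in> fv p"
      show "(f(x:=length as)) v < length (as@[a]) \<and> (e(x:=a)) v = (as@[a])!((f(x:=length as)) v)
         \<and> (e'(x:=b)) v = (bs@[b])!((f(x:=length as)) v)"
      proof (cases "v = x")
        case True then show ?thesis using len by (auto simp: nth_append)
      next
        case False
        then have "v \<in> fv (All x p)" using v by simp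
        then have "f v < length as \<and> e v = as!(f v) \<and> e' v = bs!(f v)" using All.prems(3) by blast
        then show ?thesis using len False by (auto simp: nth_append)
      qed
    qed
  qed
  show ?case
  proof
    assume A: "eval M R e (All x p)"
    show "eval N R' e' (All x p)"
    proof (simp only: eval.simps, intro ballI)
      fix b assume "b \<in> dom_of N"
      then obtain a where "a \<in> dom_of M" "ef k' M R (as@[a]) N R' (bs@[b])" using efk by auto
      then show "eval N R' (e'(x:=b)) p" using step A by auto
    qed
  next
    assume A: "eval N R' e' (All x p)"
    show "eval M R e (All x p)"
    proof (simp only: eval.simps, intro ballI)
      fix a assume "a \<in> dom_of M"
      then obtain b where "b \<in> dom_of N" "ef k' M R (as@[a]) N R' (bs@[b])" using efk by auto
      then show "eval M R (e(x:=a)) p" using step A by auto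
    qed
  qed
qed



fun lconj :: "'s fm list \<Rightarrow> 's fm" where
  "lconj [] = Eq 0 0"
| "lconj [p] = p"
| "lconj (p#q#ps) = Conj p (lconj (q#ps))"

fun ldisj :: "'s fm list \<Rightarrow> 's fm" where
  "ldisj [] = Eq 0 0"
| "ldisj [p] = p"
| "ldisj (p#q#ps) = Disj p (ldisj (q#ps))"

lemma lconj_props: "xs \<noteq> [] \<Longrightarrow> (eval M R e (lconj xs) \<longleftrightarrow> (\<forall>p\<in>set xs. eval M R e p)) \<and>
   fv (lconj xs) = \<Union>(fv ` set xs) \<and> (qr (lconj xs) \<le> k \<longleftrightarrow> (\<forall>p\<in>set xs. qr p \<le> k)) \<and>
   (wf_fm ar (lconj xs) \<longleftrightarrow> (\<forall>p\<in>set xs. wf_fm ar p))"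
  by (induction xs rule: lconj.induct) auto

lemma ldisj_props: "xs \<noteq> [] \<Longrightarrow> (eval M R e (ldisj xs) \<longleftrightarrow> (\<exists>p\<in>set xs. eval M R e p)) \<and>
   fv (ldisj xs) = \<Union>(fv ` set xs) \<and> (qr (ldisj xs) \<le> k \<longleftrightarrow> (\<forall>p\<in>set xs. qr p \<le> k)) \<and>
   (wf_fm ar (ldisj xs) \<longleftrightarrow> (\<forall>p\<in>set xs. wf_fm ar p))"
  by (induction xs rule: ldisj.induct) auto

definition conjF :: "'s fm set \<Rightarrow> 's fm" where
  "conjF S = lconj (SOME xs. set xs = S)"

definition disjF :: "'s fm set \<Rightarrow> 's fm" where
  "disjF S = ldisj (SOME xs. set xs = S)"

lemma some_list: "finite S \<Longrightarrow> set (SOME xs. set xs = S) = S"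
  by (metis (mono_tags, lifting) finite_list someI_ex)

lemma conjF_props: "finite S \<Longrightarrow> S \<noteq> {} \<Longrightarrow> (eval M R e (conjF S) \<longleftrightarrow> (\<forall>p\<in>S. eval M R e p)) \<and>
   fv (conjF S) = \<Union>(fv ` S) \<and> (qr (conjF S) \<le> k \<longleftrightarrow> (\<forall>p\<in>S. qr p \<le> k)) \<and>
   (wf_fm ar (conjF S) \<longleftrightarrow> (\<forall>p\<in>S. wf_fm ar p))"
proof -
  assume f: "finite S" and ne: "S \<noteq> {}"
  have s: "set (SOME xs. set xs = S) = S" using some_list[OF f] .
  then have "(SOME xs. set xs = S) \<noteq> []" using ne by auto
  from lconj_props[OF this, of M R e k ar] show ?thesis unfolding conjF_def s .
qed

lemma disjF_props: "finite S \<Longrightarrow> S \<noteq> {} \<Longrightarrow> (eval M R e (disjF S) \<longleftrightarrow> (\<exists>p\<in>S. eval M R e p)) \<and>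
   fv (disjF S) = \<Union>(fv ` S) \<and> (qr (disjF S) \<le> k \<longleftrightarrow> (\<forall>p\<in>S. qr p \<le> k)) \<and>
   (wf_fm ar (disjF S) \<longleftrightarrow> (\<forall>p\<in>S. wf_fm ar p))"
proof -
  assume f: "finite S" and ne: "S \<noteq> {}"
  have s: "set (SOME xs. set xs = S) = S" using some_list[OF f] .
  then have "(SOME xs. set xs = S) \<noteq> []" using ne by auto
  from ldisj_props[OF this, of M R e k ar] show ?thesis unfolding disjF_def s .
qed


lemma conjF_eval: assumes "finite S" "S \<noteq> {}" shows "eval M R e (conjF S) \<longleftrightarrow> (\<forall>p\<in>S. eval M R e p)"
  by (rule conjF_props[OF assms, THEN conjunct1])
lemma conjF_fv: assumes "finite S" "S \<noteq> {}" shows "fv (conjF S) = \<Union>(fv ` S)"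
  by (rule conjF_props[OF assms, THEN conjunct2, THEN conjunct1])
lemma conjF_qr: assumes "finite S" "S \<noteq> {}" shows "qr (conjF S) \<le> k \<longleftrightarrow> (\<forall>p\<in>S. qr p \<le> k)"
  by (rule conjF_props[OF assms, THEN conjunct2, THEN conjunct2, THEN conjunct1])
lemma conjF_wf: assumes "finite S" "S \<noteq> {}" shows "wf_fm ar (conjF S) \<longleftrightarrow> (\<forall>p\<in>S. wf_fm ar p)"
  by (rule conjF_props[OF assms, THEN conjunct2, THEN conjunct2, THEN conjunct2])
lemma disjF_eval: assumes "finite S" "S \<noteq> {}" shows "eval M R e (disjF S) \<longleftrightarrow> (\<exists>p\<in>S. eval M R e p)"
  by (rule disjF_props[OF assms, THEN conjunct1])
lemma disjF_fv: assumes "finite S" "S \<noteq> {}" shows "fv (disjF S) = \<Union>(fv ` S)"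
  by (rule disjF_props[OF assms, THEN conjunct2, THEN conjunct1])
lemma disjF_qr: assumes "finite S" "S \<noteq> {}" shows "qr (disjF S) \<le> k \<longleftrightarrow> (\<forall>p\<in>S. qr p \<le> k)"
  by (rule disjF_props[OF assms, THEN conjunct2, THEN conjunct2, THEN conjunct1])
lemma disjF_wf: assumes "finite S" "S \<noteq> {}" shows "wf_fm ar (disjF S) \<longleftrightarrow> (\<forall>p\<in>S. wf_fm ar p)"
  by (rule disjF_props[OF assms, THEN conjunct2, THEN conjunct2, THEN conjunct2])

definition lits :: "('s \<Rightarrow> nat) \<Rightarrow> nat \<Rightarrow> 's fm set" where
  "lits ar n = (\<lambda>(i,j). Eq i j) ` ({..<n}\<times>{..<n}) \<union> (\<lambda>(i,j). Lt i j) ` ({..<n}\<times>{..<n})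
     \<union> (\<Union>s. Atom s ` {vs. set vs \<subseteq> {..<n} \<and> length vs = ar s})"

lemma finite_lits: "finite (UNIV :: 's set) \<Longrightarrow> finite (lits (ar :: 's \<Rightarrow> nat) n)"
proof -
  assume f: "finite (UNIV :: 's set)"
  have "finite (\<Union>s. Atom s ` {vs. set vs \<subseteq> {..<n} \<and> length vs = ar s})"
    using f by (intro finite_UN_I finite_imageI finite_lists_length_eq) auto
  then show ?thesis unfolding lits_def by auto
qed

lemma lits_syn: "p \<in> lits ar n \<Longrightarrow> fv p \<subseteq> {..<n} \<and> qr p = 0 \<and> wf_fm ar p"
  unfolding lits_def by auto

definition okk :: "('s \<Rightarrow> nat) \<Rightarrow> nat \<Rightarrow> nat \<Rightarrow> bool" where
  "okk ar k n \<longleftrightarrow> 0 < k \<or> 0 < n \<or> (\<exists>s. ar s = 0)"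

lemma lits_ne: "okk ar 0 n \<Longrightarrow> lits ar n \<noteq> {}"
  unfolding okk_def lits_def by (auto intro!: exI[of _ "[]"])

definition G :: "nat \<Rightarrow> 's fm set \<Rightarrow> 's fm" where
  "G n S = conjF (Ex n ` S \<union> {All n (disjF S)})"

definition lit_set :: "('s \<Rightarrow> nat) \<Rightarrow> ('s,'a) struct \<Rightarrow> 'a rel \<Rightarrow> 'a list \<Rightarrow> 's fm set" where
  "lit_set ar M R as = {p\<in>lits ar (length as). eval M R ((!) as) p} \<union> Neg ` {p\<in>lits ar (length as). \<not> eval M R ((!) as) p}"

fun hint :: "('s \<Rightarrow> nat) \<Rightarrow> nat \<Rightarrow> ('s,'a) struct \<Rightarrow> 'a rel \<Rightarrow> 'a list \<Rightarrow> 's fm" where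
  "hint ar 0 M R as = conjF (lit_set ar M R as)"
| "hint ar (Suc k) M R as = G (length as) ((\<lambda>a. hint ar k M R (as@[a])) ` dom_of M)"

fun H :: "('s \<Rightarrow> nat) \<Rightarrow> nat \<Rightarrow> nat \<Rightarrow> 's fm set" where
  "H ar 0 n = conjF ` Pow (lits ar n \<union> Neg ` lits ar n)"
| "H ar (Suc k) n = G n ` Pow (H ar k (Suc n))"

lemma hint_in_H: "hint ar k M R as \<in> H ar k (length as)"
proof (induction k arbitrary: as)
  case 0
  have "lit_set ar M R as \<subseteq> lits ar (length as) \<union> Neg ` lits ar (length as)"
    unfolding lit_set_def by blast
  then show ?case by simp
next
  case (Suc k)
  have "(\<lambda>a. hint ar k M R (as@[a])) ` dom_of M \<subseteq> H ar k (Suc (length as))"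
    using Suc.IH[of "as@[_]"] by auto
  then show ?case by simp
qed

lemma finite_H: "finite (UNIV :: 's set) \<Longrightarrow> finite (H (ar :: 's \<Rightarrow> nat) k n)"
  by (induction k arbitrary: n) (simp_all add: finite_lits)

lemma lit_set_props: "finite (UNIV :: 's set) \<Longrightarrow> okk (ar :: 's \<Rightarrow> nat) 0 (length as) \<Longrightarrow>
  finite (lit_set ar M R as) \<and> lit_set ar M R as \<noteq> {}"
proof -
  assume f: "finite (UNIV :: 's set)" and o: "okk ar 0 (length as)"
  obtain p where "p \<in> lits ar (length as)" using lits_ne[OF o] by blast
  then have "p \<in> lit_set ar M R as \<or> Neg p \<in> lit_set ar M R as" unfolding lit_set_def by auto
  moreover have "finite (lit_set ar M R as)" unfolding lit_set_def using finite_lits[OF f] by auto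
  ultimately show ?thesis by blast
qed

lemma hint_syn: "finite (UNIV :: 's set) \<Longrightarrow> finite (dom_of M) \<Longrightarrow> dom_of M \<noteq> {} \<Longrightarrow> okk (ar :: 's \<Rightarrow> nat) k (length as) \<Longrightarrow>
  fv (hint ar k M R as) \<subseteq> {..<length as} \<and> qr (hint ar k M R as) \<le> k \<and> wf_fm ar (hint ar k M R as)"
proof (induction k arbitrary: as)
  case 0
  note lp = lit_set_props[OF 0(1) 0(4)]
  have A: "\<forall>p\<in>lit_set ar M R as. fv p \<subseteq> {..<length as} \<and> qr p \<le> 0 \<and> wf_fm ar p"
    unfolding lit_set_def using lits_syn by fastforce
  have fin: "finite (lit_set ar M R as)" "lit_set ar M R as \<noteq> {}" using lp by auto
  have "qr (conjF (lit_set ar M R as)) \<le> 0" using conjF_qr[OF fin, of 0] A by auto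
  then show ?case unfolding hint.simps using A conjF_fv[OF fin] conjF_wf[OF fin] by auto
next
  case (Suc k)
  let ?S = "(\<lambda>a. hint ar k M R (as@[a])) ` dom_of M"
  have IH: "\<forall>p\<in>?S. fv p \<subseteq> {..<Suc (length as)} \<and> qr p \<le> k \<and> wf_fm ar p"
  proof
    fix p assume "p \<in> ?S"
    then obtain a where p: "p = hint ar k M R (as@[a])" by blast
    have "okk ar k (length (as@[a]))" unfolding okk_def by simp
    then show "fv p \<subseteq> {..<Suc (length as)} \<and> qr p \<le> k \<and> wf_fm ar p"
      using Suc.IH[of "as@[a]"] Suc.prems p by simp
  qed
  have fS: "finite ?S" "?S \<noteq> {}" using Suc.prems by auto
  have D: "fv (disjF ?S) \<subseteq> {..<Suc (length as)} \<and> qr (disjF ?S) \<le> k \<and> wf_fm ar (disjF ?S)"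
    using IH fS by (simp add: disjF_fv disjF_qr disjF_wf) blast
  let ?T = "Ex (length as) ` ?S \<union> {All (length as) (disjF ?S)}"
  have fT: "finite ?T" "?T \<noteq> {}" using fS by auto
  have T: "\<forall>p\<in>?T. fv p \<subseteq> {..<length as} \<and> qr p \<le> Suc k \<and> wf_fm ar p"
  proof
    fix p assume "p \<in> ?T"
    then show "fv p \<subseteq> {..<length as} \<and> qr p \<le> Suc k \<and> wf_fm ar p"
    proof
      assume "p \<in> Ex (length as) ` ?S"
      then obtain q where q: "q \<in> ?S" "p = Ex (length as) q" by blast
      then have "fv q \<subseteq> {..<Suc (length as)} \<and> qr q \<le> k \<and> wf_fm ar q" using IH by blast
      then show ?thesis using q by (auto simp: less_Suc_eq subset_iff)
    next
      assume "p \<in> {All (length as) (disjF ?S)}"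
      then show ?thesis using D by (auto simp: less_Suc_eq)
    qed
  qed
  show ?case unfolding hint.simps G_def using T fT
    by (simp add: conjF_fv conjF_qr conjF_wf) blast
qed



lemma lit_eval_cong: "p \<in> lits ar (length as) \<Longrightarrow> \<forall>v<length as. e v = as!v \<Longrightarrow> eval M R e p = eval M R ((!) as) p"
  by (rule eval_cong) (use lits_syn in blast)

lemma hint_true:
  assumes fin: "finite (UNIV :: 's set)" and fd: "finite (dom_of M)" and ne: "dom_of M \<noteq> {}"
  shows "okk (ar :: 's \<Rightarrow> nat) k (length as) \<Longrightarrow> \<forall>v<length as. e v = as!v \<Longrightarrow> eval M R e (hint ar k M R as)"
proof (induction k arbitrary: as e)
  case 0
  note lp = lit_set_props[OF fin 0(1)]
  have fin0: "finite (lit_set ar M R as)" "lit_set ar M R as \<noteq> {}" using lp by auto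
  have "\<forall>p\<in>lit_set ar M R as. eval M R e p"
  proof
    fix p assume "p \<in> lit_set ar M R as"
    then consider "p \<in> lits ar (length as)" "eval M R ((!) as) p"
      | q where "p = Neg q" "q \<in> lits ar (length as)" "\<not> eval M R ((!) as) q"
      unfolding lit_set_def by blast
    then show "eval M R e p"
    proof cases
      case 1 then show ?thesis using lit_eval_cong[OF 1(1) 0(2)] by simp
    next
      case 2 then show ?thesis using lit_eval_cong[OF 2(2) 0(2)] by simp
    qed
  qed
  then show ?case using conjF_eval[OF fin0, where M=M and R=R and e=e] by simp
next
  case (Suc k)
  let ?S = "(\<lambda>a. hint ar k M R (as@[a])) ` dom_of M"
  let ?T = "Ex (length as) ` ?S \<union> {All (length as) (disjF ?S)}"
  have fS: "finite ?S" "?S \<noteq> {}" using fd ne by auto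
  have fT: "finite ?T" "?T \<noteq> {}" using fS by auto
  have IH: "eval M R (e(length as := a)) (hint ar k M R (as@[a]))" for a
  proof (rule Suc.IH)
    show "okk ar k (length (as @ [a]))" unfolding okk_def by simp
    show "\<forall>v<length (as @ [a]). (e(length as := a)) v = (as @ [a]) ! v"
      using Suc.prems(2) by (auto simp: nth_append less_Suc_eq)
  qed
  have "\<forall>p\<in>?T. eval M R e p"
  proof
    fix p assume "p \<in> ?T"
    then show "eval M R e p"
    proof
      assume "p \<in> Ex (length as) ` ?S"
      then obtain a where a: "a \<in> dom_of M" "p = Ex (length as) (hint ar k M R (as@[a]))" by blast
      then show ?thesis using IH[of a] by auto
    next
      assume "p \<in> {All (length as) (disjF ?S)}"
      then have p: "p = All (length as) (disjF ?S)" by simp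
      have "eval M R (e(length as := a)) (disjF ?S)" if "a \<in> dom_of M" for a
        using disjF_eval[OF fS] IH[of a] that by blast
      then show ?thesis using p by simp
    qed
  qed
  then show ?case unfolding hint.simps G_def using conjF_eval[OF fT, where M=M and R=R and e=e] by blast
qed

lemma pi_snoc: "pi M R (as@[a]) N R' (bs@[b]) \<Longrightarrow> pi M R as N R' bs"
proof -
  assume P: "pi M R (as@[a]) N R' (bs@[b])"
  then have len: "length as = length bs" unfolding pi_def by simp
  have 1: "set as \<subseteq> dom_of M \<and> set bs \<subseteq> dom_of N" using P unfolding pi_def by simp
  have 2: "\<forall>i<length as. \<forall>j<length as. (as!i = as!j \<longleftrightarrow> bs!i = bs!j) \<and> ((as!i, as!j) \<in> R \<longleftrightarrow> (bs!i, bs!j) \<in> R')"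
  proof (intro allI impI)
    fix i j assume ij: "i < length as" "j < length as"
    then have "i < length (as@[a])" "j < length (as@[a])" by auto
    then have "((as@[a])!i = (as@[a])!j \<longleftrightarrow> (bs@[b])!i = (bs@[b])!j) \<and> (((as@[a])!i, (as@[a])!j) \<in> R \<longleftrightarrow> ((bs@[b])!i, (bs@[b])!j) \<in> R')"
      using P unfolding pi_def by blast
    then show "(as!i = as!j \<longleftrightarrow> bs!i = bs!j) \<and> ((as!i, as!j) \<in> R \<longleftrightarrow> (bs!i, bs!j) \<in> R')"
      using ij len by (simp add: nth_append)
  qed
  have 3: "\<forall>s ix. set ix \<subseteq> {..<length as} \<longrightarrow> (map ((!) as) ix \<in> rel_of M s \<longleftrightarrow> map ((!) bs) ix \<in> rel_of N s)"
  proof (intro allI impI)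
    fix s ix assume ix: "set ix \<subseteq> {..<length as}"
    then have "set ix \<subseteq> {..<length (as@[a])}" by auto
    then have "map ((!) (as@[a])) ix \<in> rel_of M s \<longleftrightarrow> map ((!) (bs@[b])) ix \<in> rel_of N s"
      using P unfolding pi_def by blast
    moreover have "map ((!) (as@[a])) ix = map ((!) as) ix" "map ((!) (bs@[b])) ix = map ((!) bs) ix"
      using ix len by (auto simp: nth_append)
    ultimately show "map ((!) as) ix \<in> rel_of M s \<longleftrightarrow> map ((!) bs) ix \<in> rel_of N s" by simp
  qed
  show ?thesis unfolding pi_def using len 1 2 3 by blast
qed

lemma pi_of_lits:
  assumes sM: "is_struct ar M" and sN: "is_struct ar N"
    and dm: "set as \<subseteq> dom_of M" and dn: "set bs \<subseteq> dom_of N" and len: "length as = length bs"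
    and L: "\<forall>p\<in>lits ar (length as). eval M R ((!) as) p = eval N R' ((!) bs) p"
  shows "pi M R as N R' bs"
proof -
  have 2: "\<forall>i<length as. \<forall>j<length as. (as!i = as!j \<longleftrightarrow> bs!i = bs!j) \<and> ((as!i, as!j) \<in> R \<longleftrightarrow> (bs!i, bs!j) \<in> R')"
  proof (intro allI impI)
    fix i j assume ij: "i < length as" "j < length as"
    then have "Eq i j \<in> lits ar (length as)" "Lt i j \<in> lits ar (length as)" unfolding lits_def by auto
    then show "(as!i = as!j \<longleftrightarrow> bs!i = bs!j) \<and> ((as!i, as!j) \<in> R \<longleftrightarrow> (bs!i, bs!j) \<in> R')"
      using L by auto
  qed
  have 3: "\<forall>s ix. set ix \<subseteq> {..<length as} \<longrightarrow> (map ((!) as) ix \<in> rel_of M s \<longleftrightarrow> map ((!) bs) ix \<in> rel_of N s)"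
  proof (intro allI impI)
    fix s ix assume ix: "set ix \<subseteq> {..<length as}"
    show "map ((!) as) ix \<in> rel_of M s \<longleftrightarrow> map ((!) bs) ix \<in> rel_of N s"
    proof (cases "length ix = ar s")
      case True
      then have "Atom s ix \<in> lits ar (length as)" using ix unfolding lits_def by blast
      then show ?thesis using L by auto
    next
      case False
      then have "map ((!) as) ix \<notin> rel_of M s" "map ((!) bs) ix \<notin> rel_of N s"
        using sM sN unfolding is_struct_def by (metis length_map)+
      then show ?thesis by simp
    qed
  qed
  show ?thesis unfolding pi_def using len dm dn 2 3 by blast
qed

lemma hint_char:
  assumes fin: "finite (UNIV :: 's set)" and sM: "is_struct (ar :: 's \<Rightarrow> nat) M" and sN: "is_struct ar N"
  shows "set as \<subseteq> dom_of M \<Longrightarrow> set bs \<subseteq> dom_of N \<Longrightarrow> length as = length bs \<Longrightarrow> okk ar k (length as) \<Longrightarrow>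
    \<forall>v<length bs. e v = bs!v \<Longrightarrow> eval N R' e (hint ar k M R as) \<Longrightarrow> ef k M R as N R' bs"
proof (induction k arbitrary: as bs e)
  case 0
  note lp = lit_set_props[OF fin 0(4)]
  have fin0: "finite (lit_set ar M R as)" "lit_set ar M R as \<noteq> {}" using lp by auto
  have E: "\<forall>p\<in>lit_set ar M R as. eval N R' e p" using 0(6) conjF_eval[OF fin0, where M=N and R=R' and e=e] by simp
  have "\<forall>p\<in>lits ar (length as). eval M R ((!) as) p = eval N R' ((!) bs) p"
  proof
    fix p assume p: "p \<in> lits ar (length as)"
    have c: "eval N R' e p = eval N R' ((!) bs) p" using lit_eval_cong[where p=p and as=bs and e=e and M=N and R=R'] p 0(3,5) by simp
    show "eval M R ((!) as) p = eval N R' ((!) bs) p"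
    proof (cases "eval M R ((!) as) p")
      case True
      then have "p \<in> lit_set ar M R as" unfolding lit_set_def using p by blast
      then show ?thesis using E c True by simp
    next
      case False
      then have "Neg p \<in> lit_set ar M R as" unfolding lit_set_def using p by blast
      then show ?thesis using E c False by auto
    qed
  qed
  then show ?case using pi_of_lits[OF sM sN 0(1,2,3)] by simp
next
  case (Suc k)
  have fd: "finite (dom_of M)" "dom_of M \<noteq> {}" using sM unfolding is_struct_def by auto
  let ?S = "(\<lambda>a. hint ar k M R (as@[a])) ` dom_of M"
  let ?T = "Ex (length as) ` ?S \<union> {All (length as) (disjF ?S)}"
  have fS: "finite ?S" "?S \<noteq> {}" using fd by auto
  have fT: "finite ?T" "?T \<noteq> {}" using fS by auto
  have E: "\<forall>p\<in>?T. eval N R' e p" using Suc.prems(6) conjF_eval[OF fT, where M=N and R=R' and e=e] unfolding hint.simps G_def by blast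
  have IH: "ef k M R (as@[a]) N R' (bs@[b])"
    if a: "a \<in> dom_of M" and b: "b \<in> dom_of N" and ev: "eval N R' (e(length as := b)) (hint ar k M R (as@[a]))" for a b
  proof (rule Suc.IH)
    show "set (as @ [a]) \<subseteq> dom_of M" "set (bs @ [b]) \<subseteq> dom_of N" using a b Suc.prems by auto
    show "length (as @ [a]) = length (bs @ [b])" using Suc.prems by simp
    show "okk ar k (length (as @ [a]))" unfolding okk_def by simp
    show "\<forall>v<length (bs @ [b]). (e(length as := b)) v = (bs @ [b]) ! v"
      using Suc.prems(3,5) by (auto simp: nth_append less_Suc_eq)
    show "eval N R' (e(length as := b)) (hint ar k M R (as @ [a]))" by fact
  qed
  have F: "\<forall>a\<in>dom_of M. \<exists>b\<in>dom_of N. ef k M R (as@[a]) N R' (bs@[b])"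
  proof
    fix a assume a: "a \<in> dom_of M"
    then have "Ex (length as) (hint ar k M R (as@[a])) \<in> ?T" by blast
    then have "eval N R' e (Ex (length as) (hint ar k M R (as@[a])))" using E by blast
    then obtain b where "b \<in> dom_of N" "eval N R' (e(length as := b)) (hint ar k M R (as@[a]))" by auto
    then show "\<exists>b\<in>dom_of N. ef k M R (as@[a]) N R' (bs@[b])" using IH a by blast
  qed
  have B: "\<forall>b\<in>dom_of N. \<exists>a\<in>dom_of M. ef k M R (as@[a]) N R' (bs@[b])"
  proof
    fix b assume b: "b \<in> dom_of N"
    have "All (length as) (disjF ?S) \<in> ?T" by blast
    then have "eval N R' e (All (length as) (disjF ?S))" using E by blast
    then have "eval N R' (e(length as := b)) (disjF ?S)" using b by simp
    then obtain a where "a \<in> dom_of M" "eval N R' (e(length as := b)) (hint ar k M R (as@[a]))"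
      using disjF_eval[OF fS] by blast
    then show "\<exists>a\<in>dom_of M. ef k M R (as@[a]) N R' (bs@[b])" using IH b by blast
  qed
  obtain a0 where a0: "a0 \<in> dom_of M" using fd by blast
  then obtain b0 where "b0 \<in> dom_of N" "ef k M R (as@[a0]) N R' (bs@[b0])" using F by blast
  then have "pi M R as N R' bs" using ef_pi pi_snoc by metis
  then show ?case using F B by simp
qed



definition copy :: "('a \<Rightarrow> 'b) \<Rightarrow> ('s,'a) struct \<Rightarrow> ('s,'b) struct" where
  "copy f M = (f ` dom_of M, \<lambda>s. map f ` rel_of M s)"

definition imgR :: "('a \<Rightarrow> 'b) \<Rightarrow> 'a rel \<Rightarrow> 'b rel" where
  "imgR f R = map_prod f f ` R"

lemma dom_copy[simp]: "dom_of (copy f M) = f ` dom_of M" and rel_copy[simp]: "rel_of (copy f M) s = map f ` rel_of M s"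
  unfolding copy_def dom_of_def rel_of_def by auto

lemma imgR_mem: assumes inj: "inj_on f D" and sub: "R \<subseteq> D \<times> D" and x: "x \<in> D" and y: "y \<in> D"
  shows "((f x, f y) \<in> imgR f R) = ((x,y) \<in> R)"
  unfolding imgR_def
proof
  assume "(f x, f y) \<in> map_prod f f ` R"
  then obtain x' y' where xy: "(x',y') \<in> R" "f x' = f x" "f y' = f y" by auto
  then have "x' \<in> D" "y' \<in> D" using sub by auto
  then have "x' = x" "y' = y" using xy inj x y unfolding inj_on_def by auto
  then show "(x,y) \<in> R" using xy by simp
next
  assume "(x,y) \<in> R"
  then show "(f x, f y) \<in> map_prod f f ` R" by (rule rev_image_eqI) simp
qed

lemma lin_imgR: assumes "lin_order D R" "inj_on f D" shows "lin_order (f ` D) (imgR f R)"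
proof -
  have sub: "R \<subseteq> D \<times> D" and tr: "trans R" and ir: "irrefl R" and to: "total_on D R"
    using assms(1) unfolding lin_order_def strict_linear_order_on_def by auto
  have m: "\<And>x y. x \<in> D \<Longrightarrow> y \<in> D \<Longrightarrow> ((f x, f y) \<in> imgR f R) = ((x,y) \<in> R)"
    using imgR_mem[OF assms(2) sub] by blast
  have mem: "\<And>u v. (u,v) \<in> imgR f R \<Longrightarrow> \<exists>x y. x \<in> D \<and> y \<in> D \<and> u = f x \<and> v = f y \<and> (x,y) \<in> R"
    using sub unfolding imgR_def by auto
  have sub': "imgR f R \<subseteq> f ` D \<times> f ` D"
  proof
    fix z assume "z \<in> imgR f R"
    then obtain u v where z: "z = (u,v)" "(u,v) \<in> imgR f R" by (cases z) auto
    then show "z \<in> f ` D \<times> f ` D" using mem[OF z(2)] by auto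
  qed
  have "trans (imgR f R)"
  proof (rule transI)
    fix u v w assume 1: "(u,v) \<in> imgR f R" and 2: "(v,w) \<in> imgR f R"
    obtain x y where xy: "x \<in> D" "y \<in> D" "u = f x" "v = f y" "(x,y) \<in> R" using mem[OF 1] by blast
    obtain y' z where yz: "y' \<in> D" "z \<in> D" "v = f y'" "w = f z" "(y',z) \<in> R" using mem[OF 2] by blast
    have "y = y'" using xy yz assms(2) unfolding inj_on_def by metis
    then have "(x,z) \<in> R" using xy yz tr unfolding trans_def by blast
    then show "(u,w) \<in> imgR f R" using m xy yz by simp
  qed
  moreover have "irrefl (imgR f R)" unfolding irrefl_def
  proof (intro allI notI)
    fix u assume "(u,u) \<in> imgR f R"
    then obtain x y where xy: "x \<in> D" "y \<in> D" "u = f x" "u = f y" "(x,y) \<in> R" using mem by blast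
    then have "x = y" using assms(2) unfolding inj_on_def by metis
    then show False using xy ir unfolding irrefl_def by simp
  qed
  moreover have "total_on (f ` D) (imgR f R)" unfolding total_on_def
  proof (intro ballI impI)
    fix u v assume "u \<in> f ` D" "v \<in> f ` D" "u \<noteq> v"
    then obtain x y where xy: "x \<in> D" "y \<in> D" "u = f x" "v = f y" "x \<noteq> y" by blast
    then have "(x,y) \<in> R \<or> (y,x) \<in> R" using to unfolding total_on_def by blast
    then show "(u,v) \<in> imgR f R \<or> (v,u) \<in> imgR f R" using m xy by auto
  qed
  ultimately show ?thesis unfolding lin_order_def strict_linear_order_on_def using sub' by blast
qed

lemma struct_copy: "is_struct ar M \<Longrightarrow> is_struct ar (copy f M)"
  unfolding is_struct_def by auto

lemma iso_ef:
  assumes inj: "inj_on f (dom_of M)" and sM: "is_struct ar M" and sub: "R \<subseteq> dom_of M \<times> dom_of M"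
  shows "set as \<subseteq> dom_of M \<Longrightarrow> ef k M R as (copy f M) (imgR f R) (map f as)"
proof (induction k arbitrary: as)
  case 0
  have P: "pi M R as (copy f M) (imgR f R) (map f as)"
  proof -
    have 2: "\<forall>i<length as. \<forall>j<length as. (as!i = as!j \<longleftrightarrow> (map f as)!i = (map f as)!j) \<and> ((as!i, as!j) \<in> R \<longleftrightarrow> ((map f as)!i, (map f as)!j) \<in> imgR f R)"
    proof (intro allI impI)
      fix i j assume ij: "i < length as" "j < length as"
      then have d: "as!i \<in> dom_of M" "as!j \<in> dom_of M" using 0 by auto
      then show "(as!i = as!j \<longleftrightarrow> (map f as)!i = (map f as)!j) \<and> ((as!i, as!j) \<in> R \<longleftrightarrow> ((map f as)!i, (map f as)!j) \<in> imgR f R)"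
        using ij imgR_mem[OF inj sub d] inj unfolding inj_on_def by auto
    qed
    have 3: "\<forall>s ix. set ix \<subseteq> {..<length as} \<longrightarrow> (map ((!) as) ix \<in> rel_of M s \<longleftrightarrow> map ((!) (map f as)) ix \<in> rel_of (copy f M) s)"
    proof (intro allI impI)
      fix s ix assume ix: "set ix \<subseteq> {..<length as}"
      have e: "map ((!) (map f as)) ix = map f (map ((!) as) ix)" using ix by auto
      have t: "set (map ((!) as) ix) \<subseteq> dom_of M" using ix 0 by (auto dest!: subsetD nth_mem)
      have injm: "inj_on (map f) {xs. set xs \<subseteq> dom_of M}"
        by (rule inj_on_mapI) (use inj in \<open>auto intro: inj_on_subset\<close>)
      have rs: "rel_of M s \<subseteq> {xs. set xs \<subseteq> dom_of M}" using sM unfolding is_struct_def by auto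
      show "map ((!) as) ix \<in> rel_of M s \<longleftrightarrow> map ((!) (map f as)) ix \<in> rel_of (copy f M) s"
        unfolding e rel_copy using inj_on_image_mem_iff[OF injm _ rs, of "map ((!) as) ix"] t by (simp only: mem_Collect_eq)
    qed
    show ?thesis unfolding pi_def using 0 2 3 by auto
  qed
  then show ?case by simp
next
  case (Suc k)
  have P: "pi M R as (copy f M) (imgR f R) (map f as)" using Suc.IH[OF Suc.prems] ef_pi by blast
  have F: "\<forall>a\<in>dom_of M. \<exists>b\<in>dom_of (copy f M). ef k M R (as@[a]) (copy f M) (imgR f R) (map f as@[b])"
  proof
    fix a assume a: "a \<in> dom_of M"
    have "ef k M R (as@[a]) (copy f M) (imgR f R) (map f (as@[a]))" using Suc.IH[of "as@[a]"] a Suc.prems by simp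
    then show "\<exists>b\<in>dom_of (copy f M). ef k M R (as@[a]) (copy f M) (imgR f R) (map f as@[b])" using a by auto
  qed
  have B: "\<forall>b\<in>dom_of (copy f M). \<exists>a\<in>dom_of M. ef k M R (as@[a]) (copy f M) (imgR f R) (map f as@[b])"
  proof
    fix b assume "b \<in> dom_of (copy f M)"
    then obtain a where a: "a \<in> dom_of M" "b = f a" by auto
    have "ef k M R (as@[a]) (copy f M) (imgR f R) (map f (as@[a]))" using Suc.IH[of "as@[a]"] a Suc.prems by simp
    then show "\<exists>a\<in>dom_of M. ef k M R (as@[a]) (copy f M) (imgR f R) (map f as@[b])" using a by auto
  qed
  show ?case using P F B by simp
qed

lemma holds_iff: "sentence p \<Longrightarrow> a \<in> dom_of M \<Longrightarrow> holds M R p = eval M R (\<lambda>_. a) p"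
proof -
  assume s: "sentence p" and a: "a \<in> dom_of M"
  have "eval M R e p = eval M R (\<lambda>_. a) p" for e by (rule eval_cong) (use s in \<open>simp add: sentence_def\<close>)
  then show ?thesis unfolding holds_def using a by auto
qed

lemma ef_holds:
  assumes "ef k M R [] N R' []" "sentence p" "qr p \<le> k" "dom_of M \<noteq> {}" "dom_of N \<noteq> {}"
  shows "holds M R p = holds N R' p"
proof -
  obtain a b where a: "a \<in> dom_of M" and b: "b \<in> dom_of N" using assms by blast
  have "eval M R (\<lambda>_. a) p = eval N R' (\<lambda>_. b) p"
    by (rule lemmaA[OF assms(1) assms(3), where f="\<lambda>_. 0"]) (use assms(2) in \<open>simp add: sentence_def\<close>)
  then show ?thesis using holds_iff[OF assms(2) a] holds_iff[OF assms(2) b] by simp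
qed

lemma exists_inj_nat: "finite D \<Longrightarrow> \<exists>f :: 'a \<Rightarrow> nat. inj_on f D"
  using finite_imp_inj_to_nat_seg by blast

lemma exists_lin: assumes "finite D" shows "\<exists>R. lin_order D R"
proof -
  obtain f :: "'a \<Rightarrow> nat" where f: "inj_on f D" using exists_inj_nat[OF assms] by blast
  let ?R = "{(x,y). x \<in> D \<and> y \<in> D \<and> f x < f y}"
  have "lin_order D ?R"
  proof -
    have "trans ?R" unfolding trans_def by auto
    moreover have "irrefl ?R" unfolding irrefl_def by auto
    moreover have "total_on D ?R" unfolding total_on_def
    proof (intro ballI impI)
      fix x y assume "x \<in> D" "y \<in> D" "x \<noteq> y"
      then have "f x \<noteq> f y" using f unfolding inj_on_def by blast
      then show "(x,y) \<in> ?R \<or> (y,x) \<in> ?R" using \<open>x \<in> D\<close> \<open>y \<in> D\<close> by auto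
    qed
    ultimately show ?thesis unfolding lin_order_def strict_linear_order_on_def by auto
  qed
  then show ?thesis by blast
qed

lemma struct_sub: "lin_order D R \<Longrightarrow> R \<subseteq> D \<times> D" unfolding lin_order_def by blast

lemma INV:
  assumes sM: "is_struct ar (M :: ('s,'a) struct)" and oi: "ord_inv ar p" and s: "sentence p"
    and l1: "lin_order (dom_of M) R1" and l2: "lin_order (dom_of M) R2"
  shows "holds M R1 p = holds M R2 p"
proof -
  have fd: "finite (dom_of M)" "dom_of M \<noteq> {}" using sM unfolding is_struct_def by auto
  obtain f :: "'a \<Rightarrow> nat" where f: "inj_on f (dom_of M)" using exists_inj_nat[OF fd(1)] by blast
  have sC: "is_struct ar (copy f M)" using struct_copy[OF sM] .
  have e1: "ef (qr p) M R1 [] (copy f M) (imgR f R1) []" using iso_ef[OF f sM struct_sub[OF l1], of "[]"] by simp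
  have e2: "ef (qr p) M R2 [] (copy f M) (imgR f R2) []" using iso_ef[OF f sM struct_sub[OF l2], of "[]"] by simp
  have dC: "dom_of (copy f M) \<noteq> {}" using fd by simp
  have h1: "holds M R1 p = holds (copy f M) (imgR f R1) p" using ef_holds[OF e1 s order_refl fd(2) dC] .
  have h2: "holds M R2 p = holds (copy f M) (imgR f R2) p" using ef_holds[OF e2 s order_refl fd(2) dC] .
  have L1: "lin_order (dom_of (copy f M)) (imgR f R1)" using lin_imgR[OF l1 f] by simp
  have L2: "lin_order (dom_of (copy f M)) (imgR f R2)" using lin_imgR[OF l2 f] by simp
  have "is_struct ar (copy f M) \<longrightarrow> (\<forall>R1 R2. lin_order (dom_of (copy f M)) R1 \<longrightarrow> lin_order (dom_of (copy f M)) R2 \<longrightarrow>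
          (holds (copy f M) R1 p \<longleftrightarrow> holds (copy f M) R2 p))"
    using oi unfolding ord_inv_def by (rule spec)
  then have "holds (copy f M) (imgR f R1) p = holds (copy f M) (imgR f R2) p"
    using sC L1 L2 by blast
  then show ?thesis using h1 h2 by simp
qed

lemma Th_char:
  assumes sM: "is_struct ar M"
  shows "p \<in> Th_inv k ar M \<longleftrightarrow> wf_fm ar p \<and> sentence p \<and> qr p \<le> k \<and> ord_inv ar p \<and>
     (\<forall>R. lin_order (dom_of M) R \<longrightarrow> holds M R p)"
proof -
  have fd: "finite (dom_of M)" using sM unfolding is_struct_def by auto
  obtain R0 where R0: "lin_order (dom_of M) R0" using exists_lin[OF fd] by blast
  show ?thesis
  proof
    assume "p \<in> Th_inv k ar M"
    then have a: "wf_fm ar p" "sentence p" "qr p \<le> k" "ord_inv ar p" and "\<exists>R. lin_order (dom_of M) R \<and> holds M R p"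
      unfolding Th_inv_def by auto
    then obtain R where R: "lin_order (dom_of M) R" "holds M R p" by blast
    have "\<forall>R'. lin_order (dom_of M) R' \<longrightarrow> holds M R' p"
      using INV[OF sM a(4) a(2) R(1)] R(2) by blast
    then show "wf_fm ar p \<and> sentence p \<and> qr p \<le> k \<and> ord_inv ar p \<and> (\<forall>R. lin_order (dom_of M) R \<longrightarrow> holds M R p)"
      using a by blast
  next
    assume "wf_fm ar p \<and> sentence p \<and> qr p \<le> k \<and> ord_inv ar p \<and> (\<forall>R. lin_order (dom_of M) R \<longrightarrow> holds M R p)"
    then show "p \<in> Th_inv k ar M" unfolding Th_inv_def using R0 by blast
  qed
qed

lemma T1_sub:
  assumes sM: "is_struct ar M" and sN: "is_struct ar N" and l1: "lin_order (dom_of M) R" and l2: "lin_order (dom_of N) R'"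
    and e: "ef k M R [] N R' []"
  shows "Th_inv k ar M \<subseteq> Th_inv k ar N"
proof
  fix p assume p: "p \<in> Th_inv k ar M"
  have ne: "dom_of M \<noteq> {}" "dom_of N \<noteq> {}" using sM sN unfolding is_struct_def by auto
  have a: "wf_fm ar p" "sentence p" "qr p \<le> k" "ord_inv ar p" "\<forall>R. lin_order (dom_of M) R \<longrightarrow> holds M R p"
    using p Th_char[OF sM] by blast+
  have "holds M R p = holds N R' p" using ef_holds[OF e a(2) a(3) ne] .
  then have "holds N R' p" using a(5) l1 by blast
  then have "\<forall>R. lin_order (dom_of N) R \<longrightarrow> holds N R p" using INV[OF sN a(4) a(2) l2] by blast
  then show "p \<in> Th_inv k ar N" using Th_char[OF sN] a by blast
qed

lemma T1:
  assumes sM: "is_struct ar M" and sN: "is_struct ar N" and l1: "lin_order (dom_of M) R" and l2: "lin_order (dom_of N) R'"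
    and e: "ef k M R [] N R' []"
  shows "Th_inv k ar M = Th_inv k ar N"
  using T1_sub[OF sM sN l1 l2 e] T1_sub[OF sN sM l2 l1 ef_sym[OF e]] by blast



section \<open>Products\<close>

definition lexR :: "'a rel \<Rightarrow> 'b rel \<Rightarrow> 'a set \<Rightarrow> 'b set \<Rightarrow> ('a \<times> 'b) rel" where
  "lexR R Q DA DB = {((a,b),(a',b')). a \<in> DA \<and> a' \<in> DA \<and> b \<in> DB \<and> b' \<in> DB \<and> ((a,a') \<in> R \<or> (a = a' \<and> (b,b') \<in> Q))}"

lemma dom_prod[simp]: "dom_of (direct_prod A B) = dom_of A \<times> dom_of B"
  and rel_prod[simp]: "rel_of (direct_prod A B) s = {t. map fst t \<in> rel_of A s \<and> map snd t \<in> rel_of B s}"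
  unfolding direct_prod_def dom_of_def rel_of_def by auto

lemma struct_prod: assumes "is_struct ar A" "is_struct ar B" shows "is_struct ar (direct_prod A B)"
proof -
  have "finite (dom_of A \<times> dom_of B)" "dom_of A \<times> dom_of B \<noteq> {}" using assms unfolding is_struct_def by auto
  moreover have "length t = ar s \<and> set t \<subseteq> dom_of A \<times> dom_of B"
    if "map fst t \<in> rel_of A s" "map snd t \<in> rel_of B s" for s t
  proof -
    have "length (map fst t) = ar s" "set (map fst t) \<subseteq> dom_of A" "set (map snd t) \<subseteq> dom_of B"
      using assms that unfolding is_struct_def by blast+
    then show ?thesis by (auto simp: subset_iff)
  qed
  ultimately show ?thesis unfolding is_struct_def by auto
qed

lemma lin_lex: assumes "lin_order DA R" "lin_order DB Q" shows "lin_order (DA \<times> DB) (lexR R Q DA DB)"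
proof -
  have R: "R \<subseteq> DA \<times> DA" "trans R" "irrefl R" "total_on DA R"
    and Q: "Q \<subseteq> DB \<times> DB" "trans Q" "irrefl Q" "total_on DB Q"
    using assms unfolding lin_order_def strict_linear_order_on_def by auto
  have "trans (lexR R Q DA DB)"
  proof (rule transI)
    fix x y z assume 1: "(x,y) \<in> lexR R Q DA DB" and 2: "(y,z) \<in> lexR R Q DA DB"
    obtain a b a' b' a'' b'' where xyz: "x = (a,b)" "y = (a',b')" "z = (a'',b'')" by (metis surj_pair)
    show "(x,z) \<in> lexR R Q DA DB"
      using 1 2 R(2) Q(2) unfolding xyz lexR_def trans_def by auto
  qed
  moreover have "irrefl (lexR R Q DA DB)" using R(3) Q(3) unfolding irrefl_def lexR_def by auto
  moreover have "total_on (DA \<times> DB) (lexR R Q DA DB)" unfolding total_on_def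
  proof (intro ballI impI)
    fix x y assume x: "x \<in> DA \<times> DB" and y: "y \<in> DA \<times> DB" and ne: "x \<noteq> y"
    obtain a b a' b' where xy: "x = (a,b)" "y = (a',b')" by (metis surj_pair)
    show "(x,y) \<in> lexR R Q DA DB \<or> (y,x) \<in> lexR R Q DA DB"
    proof (cases "a = a'")
      case True
      then have "b \<noteq> b'" using ne xy by simp
      then have "(b,b') \<in> Q \<or> (b',b) \<in> Q" using Q(4) x y xy unfolding total_on_def by auto
      then show ?thesis using x y xy True unfolding lexR_def by auto
    next
      case False
      then have "(a,a') \<in> R \<or> (a',a) \<in> R" using R(4) x y xy unfolding total_on_def by auto
      then show ?thesis using x y xy unfolding lexR_def by auto
    qed
  qed
  moreover have "lexR R Q DA DB \<subseteq> (DA \<times> DB) \<times> (DA \<times> DB)" unfolding lexR_def by auto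
  ultimately show ?thesis unfolding lin_order_def strict_linear_order_on_def by blast
qed

lemma pi_prod:
  assumes PA: "pi A R (map fst xs) A' R' (map fst ys)" and PB: "pi B Q (map snd xs) B' Q' (map snd ys)"
  shows "pi (direct_prod A B) (lexR R Q (dom_of A) (dom_of B)) xs (direct_prod A' B') (lexR R' Q' (dom_of A') (dom_of B')) ys"
proof -
  have len: "length xs = length ys" using PA unfolding pi_def by simp
  have dA: "set (map fst xs) \<subseteq> dom_of A" "set (map fst ys) \<subseteq> dom_of A'" using PA unfolding pi_def by auto
  have dB: "set (map snd xs) \<subseteq> dom_of B" "set (map snd ys) \<subseteq> dom_of B'" using PB unfolding pi_def by auto
  have d1: "set xs \<subseteq> dom_of (direct_prod A B)" using dA(1) dB(1) by (auto simp: subset_iff)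
  have d2: "set ys \<subseteq> dom_of (direct_prod A' B')" using dA(2) dB(2) by (auto simp: subset_iff)
  have 2: "\<forall>i<length xs. \<forall>j<length xs. (xs!i = xs!j \<longleftrightarrow> ys!i = ys!j) \<and>
     ((xs!i, xs!j) \<in> lexR R Q (dom_of A) (dom_of B) \<longleftrightarrow> (ys!i, ys!j) \<in> lexR R' Q' (dom_of A') (dom_of B'))"
  proof (intro allI impI)
    fix i j assume ij: "i < length xs" "j < length xs"
    have a: "(fst (xs!i) = fst (xs!j) \<longleftrightarrow> fst (ys!i) = fst (ys!j)) \<and> ((fst (xs!i), fst (xs!j)) \<in> R \<longleftrightarrow> (fst (ys!i), fst (ys!j)) \<in> R')"
      using PA ij len unfolding pi_def by auto
    have b: "(snd (xs!i) = snd (xs!j) \<longleftrightarrow> snd (ys!i) = snd (ys!j)) \<and> ((snd (xs!i), snd (xs!j)) \<in> Q \<longleftrightarrow> (snd (ys!i), snd (ys!j)) \<in> Q')"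
      using PB ij len unfolding pi_def by auto
    have m: "xs!i \<in> dom_of A \<times> dom_of B" "xs!j \<in> dom_of A \<times> dom_of B" "ys!i \<in> dom_of A' \<times> dom_of B'" "ys!j \<in> dom_of A' \<times> dom_of B'"
      using d1 d2 ij len by auto
    show "(xs!i = xs!j \<longleftrightarrow> ys!i = ys!j) \<and>
     ((xs!i, xs!j) \<in> lexR R Q (dom_of A) (dom_of B) \<longleftrightarrow> (ys!i, ys!j) \<in> lexR R' Q' (dom_of A') (dom_of B'))"
      using a b m unfolding lexR_def by (auto simp: prod_eq_iff mem_Times_iff)
  qed
  have 3: "\<forall>s ix. set ix \<subseteq> {..<length xs} \<longrightarrow> (map ((!) xs) ix \<in> rel_of (direct_prod A B) s \<longleftrightarrow> map ((!) ys) ix \<in> rel_of (direct_prod A' B') s)"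
  proof (intro allI impI)
    fix s ix assume ix: "set ix \<subseteq> {..<length xs}"
    have e: "map fst (map ((!) xs) ix) = map ((!) (map fst xs)) ix" "map snd (map ((!) xs) ix) = map ((!) (map snd xs)) ix"
      "map fst (map ((!) ys) ix) = map ((!) (map fst ys)) ix" "map snd (map ((!) ys) ix) = map ((!) (map snd ys)) ix"
      using ix len by auto
    have "map ((!) (map fst xs)) ix \<in> rel_of A s \<longleftrightarrow> map ((!) (map fst ys)) ix \<in> rel_of A' s"
      using PA ix unfolding pi_def by auto
    moreover have "map ((!) (map snd xs)) ix \<in> rel_of B s \<longleftrightarrow> map ((!) (map snd ys)) ix \<in> rel_of B' s"
      using PB ix unfolding pi_def by auto
    ultimately show "map ((!) xs) ix \<in> rel_of (direct_prod A B) s \<longleftrightarrow> map ((!) ys) ix \<in> rel_of (direct_prod A' B') s"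
      unfolding rel_prod mem_Collect_eq e by blast
  qed
  show ?thesis unfolding pi_def using len d1 d2 2 3 by blast
qed

lemma ef_prod:
  "ef k A R (map fst xs) A' R' (map fst ys) \<Longrightarrow> ef k B Q (map snd xs) B' Q' (map snd ys) \<Longrightarrow>
   ef k (direct_prod A B) (lexR R Q (dom_of A) (dom_of B)) xs (direct_prod A' B') (lexR R' Q' (dom_of A') (dom_of B')) ys"
proof (induction k arbitrary: xs ys)
  case 0 then show ?case using pi_prod by simp
next
  case (Suc k)
  have P: "pi (direct_prod A B) (lexR R Q (dom_of A) (dom_of B)) xs (direct_prod A' B') (lexR R' Q' (dom_of A') (dom_of B')) ys"
    using pi_prod[OF ef_pi[OF Suc.prems(1)] ef_pi[OF Suc.prems(2)]] .
  have F: "\<exists>d\<in>dom_of (direct_prod A' B'). ef k (direct_prod A B) (lexR R Q (dom_of A) (dom_of B)) (xs@[c]) (direct_prod A' B') (lexR R' Q' (dom_of A') (dom_of B')) (ys@[d])"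
    if c: "c \<in> dom_of (direct_prod A B)" for c
  proof -
    obtain a b where ab: "c = (a,b)" "a \<in> dom_of A" "b \<in> dom_of B" using c by auto
    obtain a' where a': "a' \<in> dom_of A'" "ef k A R (map fst xs @ [a]) A' R' (map fst ys @ [a'])" using Suc.prems(1) ab by auto
    obtain b' where b': "b' \<in> dom_of B'" "ef k B Q (map snd xs @ [b]) B' Q' (map snd ys @ [b'])" using Suc.prems(2) ab by auto
    have "ef k (direct_prod A B) (lexR R Q (dom_of A) (dom_of B)) (xs@[c]) (direct_prod A' B') (lexR R' Q' (dom_of A') (dom_of B')) (ys@[(a',b')])"
      using Suc.IH[of "xs@[c]" "ys@[(a',b')]"] a' b' ab by simp
    then show ?thesis using a' b' by auto
  qed
  have B: "\<exists>c\<in>dom_of (direct_prod A B). ef k (direct_prod A B) (lexR R Q (dom_of A) (dom_of B)) (xs@[c]) (direct_prod A' B') (lexR R' Q' (dom_of A') (dom_of B')) (ys@[d])"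
    if d: "d \<in> dom_of (direct_prod A' B')" for d
  proof -
    obtain a' b' where ab: "d = (a',b')" "a' \<in> dom_of A'" "b' \<in> dom_of B'" using d by auto
    obtain a where a: "a \<in> dom_of A" "ef k A R (map fst xs @ [a]) A' R' (map fst ys @ [a'])" using Suc.prems(1) ab by auto
    obtain b where b: "b \<in> dom_of B" "ef k B Q (map snd xs @ [b]) B' Q' (map snd ys @ [b'])" using Suc.prems(2) ab by auto
    have "ef k (direct_prod A B) (lexR R Q (dom_of A) (dom_of B)) (xs@[(a,b)]) (direct_prod A' B') (lexR R' Q' (dom_of A') (dom_of B')) (ys@[d])"
      using Suc.IH[of "xs@[(a,b)]" "ys@[d]"] a b ab by simp
    then show ?thesis using a b by auto
  qed
  show ?case using P F B by simp
qed



definition duR :: "'a rel \<Rightarrow> 'b rel \<Rightarrow> 'a set \<Rightarrow> 'b set \<Rightarrow> ('a + 'b) rel" where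
  "duR R Q DA DB = {(Inl a, Inl a') | a a'. (a,a') \<in> R} \<union> {(Inr b, Inr b') | b b'. (b,b') \<in> Q}
     \<union> {(Inl a, Inr b) | a b. a \<in> DA \<and> b \<in> DB}"

lemma duR_simps[simp]:
  "((Inl a, Inl a') \<in> duR R Q DA DB) = ((a,a') \<in> R)"
  "((Inr b, Inr b') \<in> duR R Q DA DB) = ((b,b') \<in> Q)"
  "((Inl a, Inr b) \<in> duR R Q DA DB) = (a \<in> DA \<and> b \<in> DB)"
  "((Inr b, Inl a) \<in> duR R Q DA DB) = False"
  unfolding duR_def by auto

lemma dom_du[simp]: "dom_of (disj_union A B) = Inl ` dom_of A \<union> Inr ` dom_of B"
  unfolding disj_union_def dom_of_def by simp

lemma rel_du[simp]:
  "rel_of (disj_union A B) (Inl r) = map Inl ` rel_of A r \<union> map Inr ` rel_of B r"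
  "rel_of (disj_union A B) (Inr True) = {[Inl a] | a. a \<in> dom_of A}"
  "rel_of (disj_union A B) (Inr False) = {[Inr b] | b. b \<in> dom_of B}"
  unfolding disj_union_def dom_of_def rel_of_def by simp_all

lemma struct_du: assumes "is_struct ar A" "is_struct ar B" shows "is_struct (ar_du ar) (disj_union A B)"
proof -
  have "finite (dom_of (disj_union A B))" "dom_of (disj_union A B) \<noteq> {}" using assms unfolding is_struct_def by auto
  moreover have "\<forall>t\<in>rel_of (disj_union A B) s. length t = ar_du ar s \<and> set t \<subseteq> dom_of (disj_union A B)" for s
  proof (cases s)
    case (Inl r)
    have a: "length t = ar r \<and> set t \<subseteq> dom_of A" if "t \<in> rel_of A r" for t using assms(1) that unfolding is_struct_def by blast
    have b: "length t = ar r \<and> set t \<subseteq> dom_of B" if "t \<in> rel_of B r" for t using assms(2) that unfolding is_struct_def by blast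
    show ?thesis
    proof
      fix t assume "t \<in> rel_of (disj_union A B) s"
      then have "t \<in> map Inl ` rel_of A r \<or> t \<in> map Inr ` rel_of B r" using Inl by simp
      then show "length t = ar_du ar s \<and> set t \<subseteq> dom_of (disj_union A B)"
      proof
        assume "t \<in> map Inl ` rel_of A r"
        then obtain u where "u \<in> rel_of A r" "t = map Inl u" by blast
        then show ?thesis using a[of u] Inl unfolding ar_du_def by auto
      next
        assume "t \<in> map Inr ` rel_of B r"
        then obtain u where "u \<in> rel_of B r" "t = map Inr u" by blast
        then show ?thesis using b[of u] Inl unfolding ar_du_def by auto
      qed
    qed
  next
    case (Inr c)
    then show ?thesis unfolding ar_du_def by (cases c) auto
  qed
  ultimately show ?thesis unfolding is_struct_def by blast
qed

lemma lin_du: assumes "lin_order DA R" "lin_order DB Q" shows "lin_order (Inl ` DA \<union> Inr ` DB) (duR R Q DA DB)"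
proof -
  have R: "R \<subseteq> DA \<times> DA" "trans R" "irrefl R" "total_on DA R"
    and Q: "Q \<subseteq> DB \<times> DB" "trans Q" "irrefl Q" "total_on DB Q"
    using assms unfolding lin_order_def strict_linear_order_on_def by auto
  have "trans (duR R Q DA DB)"
  proof (rule transI)
    fix x y z assume 1: "(x,y) \<in> duR R Q DA DB" and 2: "(y,z) \<in> duR R Q DA DB"
    show "(x,z) \<in> duR R Q DA DB"
    proof (cases x; cases y; cases z)
      fix a b c assume "x = Inl a" "y = Inl b" "z = Inl c" then show ?thesis using 1 2 R(2) unfolding trans_def by auto
    next
      fix a b c assume "x = Inl a" "y = Inl b" "z = Inr c" then show ?thesis using 1 2 R(1) by auto
    next
      fix a b c assume "x = Inl a" "y = Inr b" "z = Inl c" then show ?thesis using 1 2 by auto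
    next
      fix a b c assume "x = Inl a" "y = Inr b" "z = Inr c" then show ?thesis using 1 2 Q(1) by auto
    next
      fix a b c assume "x = Inr a" "y = Inl b" "z = Inl c" then show ?thesis using 1 2 by auto
    next
      fix a b c assume "x = Inr a" "y = Inl b" "z = Inr c" then show ?thesis using 1 2 by auto
    next
      fix a b c assume "x = Inr a" "y = Inr b" "z = Inl c" then show ?thesis using 1 2 by auto
    next
      fix a b c assume "x = Inr a" "y = Inr b" "z = Inr c" then show ?thesis using 1 2 Q(2) unfolding trans_def by auto
    qed
  qed
  moreover have "irrefl (duR R Q DA DB)" unfolding irrefl_def
  proof
    fix x show "(x,x) \<notin> duR R Q DA DB" using R(3) Q(3) unfolding irrefl_def by (cases x) auto
  qed
  moreover have "total_on (Inl ` DA \<union> Inr ` DB) (duR R Q DA DB)" unfolding total_on_def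
  proof (intro ballI impI)
    fix x y assume x: "x \<in> Inl ` DA \<union> Inr ` DB" and y: "y \<in> Inl ` DA \<union> Inr ` DB" and ne: "x \<noteq> y"
    show "(x,y) \<in> duR R Q DA DB \<or> (y,x) \<in> duR R Q DA DB"
    proof (cases x; cases y)
      fix a b assume "x = Inl a" "y = Inl b" then show ?thesis using x y ne R(4) unfolding total_on_def by auto
    next
      fix a b assume "x = Inl a" "y = Inr b" then show ?thesis using x y by auto
    next
      fix a b assume "x = Inr a" "y = Inl b" then show ?thesis using x y by auto
    next
      fix a b assume "x = Inr a" "y = Inr b" then show ?thesis using x y ne Q(4) unfolding total_on_def by auto
    qed
  qed
  moreover have "duR R Q DA DB \<subseteq> (Inl ` DA \<union> Inr ` DB) \<times> (Inl ` DA \<union> Inr ` DB)"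
    using R(1) Q(1) unfolding duR_def by auto
  ultimately show ?thesis unfolding lin_order_def strict_linear_order_on_def by blast
qed

definition lefts :: "('a + 'b) list \<Rightarrow> 'a list" where "lefts xs = map projl (filter isl xs)"
definition rights :: "('a + 'b) list \<Rightarrow> 'b list" where "rights xs = map projr (filter (\<lambda>x. \<not> isl x) xs)"
definition lidx :: "('a + 'b) list \<Rightarrow> nat \<Rightarrow> nat" where "lidx xs i = length (filter isl (take i xs))"
definition ridx :: "('a + 'b) list \<Rightarrow> nat \<Rightarrow> nat" where "ridx xs i = length (filter (\<lambda>x. \<not> isl x) (take i xs))"

lemma lefts_snoc[simp]: "lefts (xs@[Inl a]) = lefts xs @ [a]" "lefts (xs@[Inr b]) = lefts xs"
  and rights_snoc[simp]: "rights (xs@[Inl a]) = rights xs" "rights (xs@[Inr b]) = rights xs @ [b]"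
  unfolding lefts_def rights_def by simp_all

lemma lidx_prop: "i < length xs \<Longrightarrow> isl (xs!i) \<Longrightarrow> lidx xs i < length (lefts xs) \<and> lefts xs ! lidx xs i = projl (xs!i)"
proof (induction xs arbitrary: i)
  case Nil then show ?case by simp
next
  case (Cons x xs)
  show ?case
  proof (cases i)
    case 0 then show ?thesis using Cons.prems unfolding lidx_def lefts_def by simp
  next
    case (Suc j)
    then have "lidx xs j < length (lefts xs) \<and> lefts xs ! lidx xs j = projl (xs!j)" using Cons by simp
    then show ?thesis using Suc unfolding lidx_def lefts_def by (cases "isl x") simp_all
  qed
qed

lemma ridx_prop: "i < length xs \<Longrightarrow> \<not> isl (xs!i) \<Longrightarrow> ridx xs i < length (rights xs) \<and> rights xs ! ridx xs i = projr (xs!i)"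
proof (induction xs arbitrary: i)
  case Nil then show ?case by simp
next
  case (Cons x xs)
  show ?case
  proof (cases i)
    case 0 then show ?thesis using Cons.prems unfolding ridx_def rights_def by simp
  next
    case (Suc j)
    then have "ridx xs j < length (rights xs) \<and> rights xs ! ridx xs j = projr (xs!j)" using Cons by simp
    then show ?thesis using Suc unfolding ridx_def rights_def by (cases "isl x") simp_all
  qed
qed

lemma lidx_pat: "map isl xs = map isl ys \<Longrightarrow> lidx xs i = lidx ys i"
proof -
  assume "map isl xs = map isl ys"
  then have "map isl (take i xs) = map isl (take i ys)" by (metis take_map)
  then have "length (filter id (map isl (take i xs))) = length (filter id (map isl (take i ys)))" by simp
  then show ?thesis unfolding lidx_def by (simp add: filter_map comp_def)
qed

lemma ridx_pat: "map isl xs = map isl ys \<Longrightarrow> ridx xs i = ridx ys i"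
proof -
  assume "map isl xs = map isl ys"
  then have "map isl (take i xs) = map isl (take i ys)" by (metis take_map)
  then have "length (filter Not (map isl (take i xs))) = length (filter Not (map isl (take i ys)))" by simp
  then show ?thesis unfolding ridx_def by (simp add: filter_map comp_def)
qed

lemma nth_Inl: "i < length xs \<Longrightarrow> isl (xs!i) \<Longrightarrow> xs!i = Inl (lefts xs ! lidx xs i)"
  using lidx_prop by (metis sum.collapse(1))

lemma nth_Inr: "i < length xs \<Longrightarrow> \<not> isl (xs!i) \<Longrightarrow> xs!i = Inr (rights xs ! ridx xs i)"
  using ridx_prop by (metis sum.collapse(2))

lemma map_nth_Inl:
  assumes ix: "set ix \<subseteq> {..<length xs}"
  shows "map ((!) xs) ix \<in> map Inl ` S \<longleftrightarrow> (\<forall>i\<in>set ix. isl (xs!i)) \<and> map ((!) (lefts xs)) (map (lidx xs) ix) \<in> S"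
proof
  assume "map ((!) xs) ix \<in> map Inl ` S"
  then obtain t where t: "t \<in> S" "map ((!) xs) ix = map Inl t" by blast
  have all: "\<forall>i\<in>set ix. isl (xs!i)"
  proof
    fix i assume "i \<in> set ix"
    then have "xs!i \<in> set (map ((!) xs) ix)" by simp
    then show "isl (xs!i)" using t(2) by auto
  qed
  have "map ((!) xs) ix = map Inl (map ((!) (lefts xs)) (map (lidx xs) ix))"
    using all ix nth_Inl by (auto intro!: map_cong)
  then have "t = map ((!) (lefts xs)) (map (lidx xs) ix)" using t(2) by (metis map_injective inj_Inl)
  then show "(\<forall>i\<in>set ix. isl (xs!i)) \<and> map ((!) (lefts xs)) (map (lidx xs) ix) \<in> S" using all t by simp
next
  assume a: "(\<forall>i\<in>set ix. isl (xs!i)) \<and> map ((!) (lefts xs)) (map (lidx xs) ix) \<in> S"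
  have "map ((!) xs) ix = map Inl (map ((!) (lefts xs)) (map (lidx xs) ix))"
    using a ix nth_Inl by (auto intro!: map_cong)
  then show "map ((!) xs) ix \<in> map Inl ` S" using a by blast
qed

lemma map_nth_Inr:
  assumes ix: "set ix \<subseteq> {..<length xs}"
  shows "map ((!) xs) ix \<in> map Inr ` S \<longleftrightarrow> (\<forall>i\<in>set ix. \<not> isl (xs!i)) \<and> map ((!) (rights xs)) (map (ridx xs) ix) \<in> S"
proof
  assume "map ((!) xs) ix \<in> map Inr ` S"
  then obtain t where t: "t \<in> S" "map ((!) xs) ix = map Inr t" by blast
  have all: "\<forall>i\<in>set ix. \<not> isl (xs!i)"
  proof
    fix i assume "i \<in> set ix"
    then have "xs!i \<in> set (map ((!) xs) ix)" by simp
    then show "\<not> isl (xs!i)" using t(2) by auto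
  qed
  have "map ((!) xs) ix = map Inr (map ((!) (rights xs)) (map (ridx xs) ix))"
    using all ix nth_Inr by (auto intro!: map_cong)
  then have "t = map ((!) (rights xs)) (map (ridx xs) ix)" using t(2) by (metis map_injective inj_Inr)
  then show "(\<forall>i\<in>set ix. \<not> isl (xs!i)) \<and> map ((!) (rights xs)) (map (ridx xs) ix) \<in> S" using all t by simp
next
  assume a: "(\<forall>i\<in>set ix. \<not> isl (xs!i)) \<and> map ((!) (rights xs)) (map (ridx xs) ix) \<in> S"
  have "map ((!) xs) ix = map Inr (map ((!) (rights xs)) (map (ridx xs) ix))"
    using a ix nth_Inr by (auto intro!: map_cong)
  then show "map ((!) xs) ix \<in> map Inr ` S" using a by blast
qed



lemma set_lefts: "x \<in> set xs \<Longrightarrow> isl x \<Longrightarrow> projl x \<in> set (lefts xs)"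
  unfolding lefts_def by auto
lemma set_rights: "x \<in> set xs \<Longrightarrow> \<not> isl x \<Longrightarrow> projr x \<in> set (rights xs)"
  unfolding rights_def by auto

lemma dom_from_parts: "set (lefts xs) \<subseteq> DA \<Longrightarrow> set (rights xs) \<subseteq> DB \<Longrightarrow> set xs \<subseteq> Inl ` DA \<union> Inr ` DB"
proof
  fix x assume a: "set (lefts xs) \<subseteq> DA" "set (rights xs) \<subseteq> DB" and x: "x \<in> set xs"
  show "x \<in> Inl ` DA \<union> Inr ` DB"
  proof (cases x)
    case (Inl u) then show ?thesis using set_lefts[OF x] a by auto
  next
    case (Inr u) then show ?thesis using set_rights[OF x] a by auto
  qed
qed

lemma du_true: assumes "set xs \<subseteq> Inl ` DA \<union> Inr ` DB" "set ix \<subseteq> {..<length xs}"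
  shows "map ((!) xs) ix \<in> {[Inl a] | a. a \<in> DA} \<longleftrightarrow> (\<exists>i. ix = [i] \<and> isl (xs!i))"
proof
  assume "map ((!) xs) ix \<in> {[Inl a] | a. a \<in> DA}"
  then obtain a where "map ((!) xs) ix = [Inl a]" by force
  then obtain i where "ix = [i]" "xs!i = Inl a" by (cases ix) auto
  then show "\<exists>i. ix = [i] \<and> isl (xs!i)" by auto
next
  assume "\<exists>i. ix = [i] \<and> isl (xs!i)"
  then obtain i where i: "ix = [i]" "isl (xs!i)" by blast
  then have "xs!i \<in> set xs" using assms(2) by auto
  then have "xs!i \<in> Inl ` DA" using assms(1) i(2) by auto
  then show "map ((!) xs) ix \<in> {[Inl a] | a. a \<in> DA}" using i by auto
qed

lemma du_false: assumes "set xs \<subseteq> Inl ` DA \<union> Inr ` DB" "set ix \<subseteq> {..<length xs}"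
  shows "map ((!) xs) ix \<in> {[Inr a] | a. a \<in> DB} \<longleftrightarrow> (\<exists>i. ix = [i] \<and> \<not> isl (xs!i))"
proof
  assume "map ((!) xs) ix \<in> {[Inr a] | a. a \<in> DB}"
  then obtain a where "map ((!) xs) ix = [Inr a]" by force
  then obtain i where "ix = [i]" "xs!i = Inr a" by (cases ix) auto
  then show "\<exists>i. ix = [i] \<and> \<not> isl (xs!i)" by auto
next
  assume "\<exists>i. ix = [i] \<and> \<not> isl (xs!i)"
  then obtain i where i: "ix = [i]" "\<not> isl (xs!i)" by blast
  then have "xs!i \<in> set xs" using assms(2) by auto
  then have "xs!i \<in> Inr ` DB" using assms(1) i(2) by auto
  then show "map ((!) xs) ix \<in> {[Inr a] | a. a \<in> DB}" using i by auto
qed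

lemma pi_du:
  assumes pat: "map isl xs = map isl ys"
    and PA: "pi A R (lefts xs) A' R' (lefts ys)" and PB: "pi B Q (rights xs) B' Q' (rights ys)"
  shows "pi (disj_union A B) (duR R Q (dom_of A) (dom_of B)) xs (disj_union A' B') (duR R' Q' (dom_of A') (dom_of B')) ys"
proof -
  have len: "length xs = length ys" using pat by (metis length_map)
  have isl_eq: "isl (xs!i) = isl (ys!i)" if "i < length xs" for i using pat that len by (metis nth_map)
  have lenL: "length (lefts xs) = length (lefts ys)" and lenR: "length (rights xs) = length (rights ys)"
    using PA PB unfolding pi_def by auto
  have dLx: "set (lefts xs) \<subseteq> dom_of A" and dLy: "set (lefts ys) \<subseteq> dom_of A'"
    and dRx: "set (rights xs) \<subseteq> dom_of B" and dRy: "set (rights ys) \<subseteq> dom_of B'"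
    using PA PB unfolding pi_def by auto
  have dx: "set xs \<subseteq> dom_of (disj_union A B)" using dom_from_parts[OF dLx dRx] by simp
  have dy: "set ys \<subseteq> dom_of (disj_union A' B')" using dom_from_parts[OF dLy dRy] by simp
  have PA2: "\<forall>i<length (lefts xs). \<forall>j<length (lefts xs). (lefts xs!i = lefts xs!j \<longleftrightarrow> lefts ys!i = lefts ys!j) \<and> ((lefts xs!i, lefts xs!j) \<in> R \<longleftrightarrow> (lefts ys!i, lefts ys!j) \<in> R')"
    using PA unfolding pi_def by blast
  have PB2: "\<forall>i<length (rights xs). \<forall>j<length (rights xs). (rights xs!i = rights xs!j \<longleftrightarrow> rights ys!i = rights ys!j) \<and> ((rights xs!i, rights xs!j) \<in> Q \<longleftrightarrow> (rights ys!i, rights ys!j) \<in> Q')"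
    using PB unfolding pi_def by blast
  have PA3: "\<forall>s ix. set ix \<subseteq> {..<length (lefts xs)} \<longrightarrow> (map ((!) (lefts xs)) ix \<in> rel_of A s \<longleftrightarrow> map ((!) (lefts ys)) ix \<in> rel_of A' s)"
    using PA unfolding pi_def by blast
  have PB3: "\<forall>s ix. set ix \<subseteq> {..<length (rights xs)} \<longrightarrow> (map ((!) (rights xs)) ix \<in> rel_of B s \<longleftrightarrow> map ((!) (rights ys)) ix \<in> rel_of B' s)"
    using PB unfolding pi_def by blast
  have cs: "(isl (xs!i) \<and> xs!i = Inl (lefts xs ! lidx xs i) \<and> ys!i = Inl (lefts ys ! lidx xs i) \<and> lidx xs i < length (lefts xs))
      \<or> (\<not> isl (xs!i) \<and> xs!i = Inr (rights xs ! ridx xs i) \<and> ys!i = Inr (rights ys ! ridx xs i) \<and> ridx xs i < length (rights xs))"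
    if i: "i < length xs" for i
  proof (cases "isl (xs!i)")
    case True
    then have "isl (ys!i)" using isl_eq i by simp
    then show ?thesis using True nth_Inl[OF i True] nth_Inl[of i ys] lidx_prop[OF i True] lidx_pat[OF pat, of i] i len by simp
  next
    case False
    then have "\<not> isl (ys!i)" using isl_eq i by simp
    then show ?thesis using False nth_Inr[OF i False] nth_Inr[of i ys] ridx_prop[OF i False] ridx_pat[OF pat, of i] i len by simp
  qed
  have 2: "\<forall>i<length xs. \<forall>j<length xs. (xs!i = xs!j \<longleftrightarrow> ys!i = ys!j) \<and>
     ((xs!i, xs!j) \<in> duR R Q (dom_of A) (dom_of B) \<longleftrightarrow> (ys!i, ys!j) \<in> duR R' Q' (dom_of A') (dom_of B'))"
  proof (intro allI impI)
    fix i j assume i: "i < length xs" and j: "j < length xs"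
    show "(xs!i = xs!j \<longleftrightarrow> ys!i = ys!j) \<and>
     ((xs!i, xs!j) \<in> duR R Q (dom_of A) (dom_of B) \<longleftrightarrow> (ys!i, ys!j) \<in> duR R' Q' (dom_of A') (dom_of B'))"
    proof (rule disjE[OF cs[OF i]]; rule disjE[OF cs[OF j]])
      assume a: "isl (xs!i) \<and> xs!i = Inl (lefts xs ! lidx xs i) \<and> ys!i = Inl (lefts ys ! lidx xs i) \<and> lidx xs i < length (lefts xs)"
        and b: "isl (xs!j) \<and> xs!j = Inl (lefts xs ! lidx xs j) \<and> ys!j = Inl (lefts ys ! lidx xs j) \<and> lidx xs j < length (lefts xs)"
      then show ?thesis using PA2 by simp
    next
      assume a: "isl (xs!i) \<and> xs!i = Inl (lefts xs ! lidx xs i) \<and> ys!i = Inl (lefts ys ! lidx xs i) \<and> lidx xs i < length (lefts xs)"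
        and b: "\<not> isl (xs!j) \<and> xs!j = Inr (rights xs ! ridx xs j) \<and> ys!j = Inr (rights ys ! ridx xs j) \<and> ridx xs j < length (rights xs)"
      have "lefts xs ! lidx xs i \<in> dom_of A" "lefts ys ! lidx xs i \<in> dom_of A'"
           "rights xs ! ridx xs j \<in> dom_of B" "rights ys ! ridx xs j \<in> dom_of B'"
        using a b dLx dLy dRx dRy lenL lenR by (auto intro!: subsetD[OF _ nth_mem])
      then show ?thesis using a b by simp
    next
      assume a: "\<not> isl (xs!i) \<and> xs!i = Inr (rights xs ! ridx xs i) \<and> ys!i = Inr (rights ys ! ridx xs i) \<and> ridx xs i < length (rights xs)"
        and b: "isl (xs!j) \<and> xs!j = Inl (lefts xs ! lidx xs j) \<and> ys!j = Inl (lefts ys ! lidx xs j) \<and> lidx xs j < length (lefts xs)"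
      then show ?thesis by simp
    next
      assume a: "\<not> isl (xs!i) \<and> xs!i = Inr (rights xs ! ridx xs i) \<and> ys!i = Inr (rights ys ! ridx xs i) \<and> ridx xs i < length (rights xs)"
        and b: "\<not> isl (xs!j) \<and> xs!j = Inr (rights xs ! ridx xs j) \<and> ys!j = Inr (rights ys ! ridx xs j) \<and> ridx xs j < length (rights xs)"
      then show ?thesis using PB2 by simp
    qed
  qed
  have 3: "\<forall>s ix. set ix \<subseteq> {..<length xs} \<longrightarrow> (map ((!) xs) ix \<in> rel_of (disj_union A B) s \<longleftrightarrow> map ((!) ys) ix \<in> rel_of (disj_union A' B') s)"
  proof (intro allI impI)
    fix s ix assume ix: "set ix \<subseteq> {..<length xs}"
    have ixy: "set ix \<subseteq> {..<length ys}" using ix len by simp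
    have allL: "(\<forall>i\<in>set ix. isl (xs!i)) = (\<forall>i\<in>set ix. isl (ys!i))" using isl_eq ix by auto
    have mL: "map (lidx xs) ix = map (lidx ys) ix" using lidx_pat[OF pat] by simp
    have mR: "map (ridx xs) ix = map (ridx ys) ix" using ridx_pat[OF pat] by simp
    show "map ((!) xs) ix \<in> rel_of (disj_union A B) s \<longleftrightarrow> map ((!) ys) ix \<in> rel_of (disj_union A' B') s"
    proof (cases s)
      case (Inl r)
      have L: "((\<forall>i\<in>set ix. isl (xs!i)) \<and> map ((!) (lefts xs)) (map (lidx xs) ix) \<in> rel_of A r) \<longleftrightarrow>
               ((\<forall>i\<in>set ix. isl (ys!i)) \<and> map ((!) (lefts ys)) (map (lidx ys) ix) \<in> rel_of A' r)"
      proof (cases "\<forall>i\<in>set ix. isl (xs!i)")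
        case True
        then have "set (map (lidx xs) ix) \<subseteq> {..<length (lefts xs)}" using lidx_prop ix by auto
        then have "map ((!) (lefts xs)) (map (lidx xs) ix) \<in> rel_of A r \<longleftrightarrow> map ((!) (lefts ys)) (map (lidx xs) ix) \<in> rel_of A' r"
          using PA3 by blast
        then show ?thesis using allL True by (simp only: mL)
      qed (use allL in auto)
      have allR: "(\<forall>i\<in>set ix. \<not> isl (xs!i)) = (\<forall>i\<in>set ix. \<not> isl (ys!i))" using isl_eq ix by auto
      have Rr: "((\<forall>i\<in>set ix. \<not> isl (xs!i)) \<and> map ((!) (rights xs)) (map (ridx xs) ix) \<in> rel_of B r) \<longleftrightarrow>
               ((\<forall>i\<in>set ix. \<not> isl (ys!i)) \<and> map ((!) (rights ys)) (map (ridx ys) ix) \<in> rel_of B' r)"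
      proof (cases "\<forall>i\<in>set ix. \<not> isl (xs!i)")
        case True
        then have "set (map (ridx xs) ix) \<subseteq> {..<length (rights xs)}" using ridx_prop ix by auto
        then have "map ((!) (rights xs)) (map (ridx xs) ix) \<in> rel_of B r \<longleftrightarrow> map ((!) (rights ys)) (map (ridx xs) ix) \<in> rel_of B' r"
          using PB3 by blast
        then show ?thesis using allR True by (simp only: mR)
      qed (use allR in auto)
      show ?thesis unfolding Inl rel_du Un_iff map_nth_Inl[OF ix] map_nth_Inr[OF ix] map_nth_Inl[OF ixy] map_nth_Inr[OF ixy]
        using L Rr by blast
    next
      case (Inr c)
      show ?thesis
      proof (cases c)
        case True
        have s: "s = Inr True" using Inr True by simp
        show ?thesis unfolding s rel_du du_true[OF dx[unfolded dom_du] ix] du_true[OF dy[unfolded dom_du] ixy]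
          using isl_eq ix by auto
      next
        case False
        have s: "s = Inr False" using Inr False by simp
        show ?thesis unfolding s rel_du du_false[OF dx[unfolded dom_du] ix] du_false[OF dy[unfolded dom_du] ixy]
          using isl_eq ix by auto
      qed
    qed
  qed
  show ?thesis unfolding pi_def using len dx dy 2 3 by blast
qed

lemma ef_du:
  "map isl xs = map isl ys \<Longrightarrow> ef k A R (lefts xs) A' R' (lefts ys) \<Longrightarrow> ef k B Q (rights xs) B' Q' (rights ys) \<Longrightarrow>
   ef k (disj_union A B) (duR R Q (dom_of A) (dom_of B)) xs (disj_union A' B') (duR R' Q' (dom_of A') (dom_of B')) ys"
proof (induction k arbitrary: xs ys)
  case 0 then show ?case using pi_du by simp
next
  case (Suc k)
  let ?M = "disj_union A B" and ?N = "disj_union A' B'"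
  let ?R = "duR R Q (dom_of A) (dom_of B)" and ?R' = "duR R' Q' (dom_of A') (dom_of B')"
  have P: "pi ?M ?R xs ?N ?R' ys"
    using pi_du[OF Suc.prems(1) ef_pi[OF Suc.prems(2)] ef_pi[OF Suc.prems(3)]] .
  have eA: "ef k A R (lefts xs) A' R' (lefts ys)" using ef_mono Suc.prems(2) by blast
  have eB: "ef k B Q (rights xs) B' Q' (rights ys)" using ef_mono Suc.prems(3) by blast
  have F: "\<exists>d\<in>dom_of ?N. ef k ?M ?R (xs@[c]) ?N ?R' (ys@[d])" if c: "c \<in> dom_of ?M" for c
  proof (cases c)
    case (Inl a)
    then have a: "a \<in> dom_of A" using c by auto
    obtain a' where a': "a' \<in> dom_of A'" "ef k A R (lefts xs @ [a]) A' R' (lefts ys @ [a'])" using Suc.prems(2) a by auto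
    have "ef k ?M ?R (xs@[c]) ?N ?R' (ys@[Inl a'])"
      using Suc.IH[of "xs@[c]" "ys@[Inl a']"] a' eB Suc.prems(1) Inl by simp
    then show ?thesis using a' by auto
  next
    case (Inr b)
    then have b: "b \<in> dom_of B" using c by auto
    obtain b' where b': "b' \<in> dom_of B'" "ef k B Q (rights xs @ [b]) B' Q' (rights ys @ [b'])" using Suc.prems(3) b by auto
    have "ef k ?M ?R (xs@[c]) ?N ?R' (ys@[Inr b'])"
      using Suc.IH[of "xs@[c]" "ys@[Inr b']"] b' eA Suc.prems(1) Inr by simp
    then show ?thesis using b' by auto
  qed
  have B: "\<exists>c\<in>dom_of ?M. ef k ?M ?R (xs@[c]) ?N ?R' (ys@[d])" if d: "d \<in> dom_of ?N" for d
  proof (cases d)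
    case (Inl a')
    then have a': "a' \<in> dom_of A'" using d by auto
    obtain a where a: "a \<in> dom_of A" "ef k A R (lefts xs @ [a]) A' R' (lefts ys @ [a'])" using Suc.prems(2) a' by auto
    have "ef k ?M ?R (xs@[Inl a]) ?N ?R' (ys@[d])"
      using Suc.IH[of "xs@[Inl a]" "ys@[d]"] a eB Suc.prems(1) Inl by simp
    then show ?thesis using a by auto
  next
    case (Inr b')
    then have b': "b' \<in> dom_of B'" using d by auto
    obtain b where b: "b \<in> dom_of B" "ef k B Q (rights xs @ [b]) B' Q' (rights ys @ [b'])" using Suc.prems(3) b' by auto
    have "ef k ?M ?R (xs@[Inr b]) ?N ?R' (ys@[d])"
      using Suc.IH[of "xs@[Inr b]" "ys@[d]"] b eA Suc.prems(1) Inr by simp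
    then show ?thesis using b by auto
  qed
  show ?case using P F B by simp
qed



definition EQ :: "nat \<Rightarrow> ('s \<Rightarrow> nat) \<Rightarrow> ('s,'a) struct \<Rightarrow> ('s,'b) struct \<Rightarrow> bool" where
  "EQ k ar M N \<longleftrightarrow> is_struct ar M \<and> is_struct ar N \<and>
     (\<exists>R R'. lin_order (dom_of M) R \<and> lin_order (dom_of N) R' \<and> ef k M R [] N R' [])"

lemma pi_refl: "set as \<subseteq> dom_of M \<Longrightarrow> pi M R as M R as"
  unfolding pi_def by auto

lemma ef_refl: "set as \<subseteq> dom_of M \<Longrightarrow> ef k M R as M R as"
proof (induction k arbitrary: as)
  case 0 then show ?case using pi_refl by simp
next
  case (Suc k)
  have "\<forall>a\<in>dom_of M. ef k M R (as@[a]) M R (as@[a])" using Suc by simp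
  then show ?case using pi_refl[OF Suc.prems] by auto
qed

lemma EQ_refl: "is_struct ar M \<Longrightarrow> EQ k ar M M"
proof -
  assume s: "is_struct ar M"
  then obtain R where "lin_order (dom_of M) R" using exists_lin unfolding is_struct_def by blast
  then show ?thesis unfolding EQ_def using s ef_refl[of "[]" M k R] by auto
qed

lemma EQ_Th: assumes "EQ k ar M N" shows "Th_inv k ar M = Th_inv k ar N"
proof -
  obtain R R' where "is_struct ar M" "is_struct ar N" "lin_order (dom_of M) R" "lin_order (dom_of N) R'" "ef k M R [] N R' []"
    using assms unfolding EQ_def by blast
  then show ?thesis by (rule T1)
qed

lemma EQ_du: assumes "EQ k ar A A'" "EQ k ar B B'"
  shows "Th_inv k (ar_du ar) (disj_union A B) = Th_inv k (ar_du ar) (disj_union A' B')"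
proof -
  obtain R R' where A: "is_struct ar A" "is_struct ar A'" "lin_order (dom_of A) R" "lin_order (dom_of A') R'" "ef k A R [] A' R' []"
    using assms(1) unfolding EQ_def by blast
  obtain Q Q' where B: "is_struct ar B" "is_struct ar B'" "lin_order (dom_of B) Q" "lin_order (dom_of B') Q'" "ef k B Q [] B' Q' []"
    using assms(2) unfolding EQ_def by blast
  have e: "ef k (disj_union A B) (duR R Q (dom_of A) (dom_of B)) [] (disj_union A' B') (duR R' Q' (dom_of A') (dom_of B')) []"
    using ef_du[of "[]" "[]"] A(5) B(5) unfolding lefts_def rights_def by simp
  show ?thesis
    by (rule T1[OF struct_du[OF A(1) B(1)] struct_du[OF A(2) B(2)] _ _ e])
       (use lin_du[OF A(3) B(3)] lin_du[OF A(4) B(4)] in simp_all)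
qed

lemma EQ_prod: assumes "EQ k ar A A'" "EQ k ar B B'"
  shows "Th_inv k ar (direct_prod A B) = Th_inv k ar (direct_prod A' B')"
proof -
  obtain R R' where A: "is_struct ar A" "is_struct ar A'" "lin_order (dom_of A) R" "lin_order (dom_of A') R'" "ef k A R [] A' R' []"
    using assms(1) unfolding EQ_def by blast
  obtain Q Q' where B: "is_struct ar B" "is_struct ar B'" "lin_order (dom_of B) Q" "lin_order (dom_of B') Q'" "ef k B Q [] B' Q' []"
    using assms(2) unfolding EQ_def by blast
  have e: "ef k (direct_prod A B) (lexR R Q (dom_of A) (dom_of B)) [] (direct_prod A' B') (lexR R' Q' (dom_of A') (dom_of B')) []"
    using ef_prod[of k A R "[]" A' R' "[]"] A(5) B(5) by simp
  show ?thesis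
    by (rule T1[OF struct_prod[OF A(1) B(1)] struct_prod[OF A(2) B(2)] _ _ e])
       (use lin_lex[OF A(3) B(3)] lin_lex[OF A(4) B(4)] in simp_all)
qed

definition Erel :: "nat \<Rightarrow> ('s \<Rightarrow> nat) \<Rightarrow> (('s, nat) struct \<times> ('s, nat) struct) set" where
  "Erel k ar = {(X,Y). EQ k ar X Y}"

lemma EQ_copy: assumes s: "is_struct ar (M :: ('s,'a) struct)" shows "\<exists>M' :: ('s,nat) struct. EQ k ar M M'"
proof -
  have fd: "finite (dom_of M)" using s unfolding is_struct_def by auto
  obtain f :: "'a \<Rightarrow> nat" where f: "inj_on f (dom_of M)" using exists_inj_nat[OF fd] by blast
  obtain R where R: "lin_order (dom_of M) R" using exists_lin[OF fd] by blast
  have e: "ef k M R [] (copy f M) (imgR f R) []" using iso_ef[OF f s struct_sub[OF R], of "[]"] by simp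
  have "lin_order (dom_of (copy f M)) (imgR f R)" using lin_imgR[OF R f] by simp
  then have "EQ k ar M (copy f M)" unfolding EQ_def using s struct_copy[OF s] R e by blast
  then show ?thesis by blast
qed

lemma Erel_struct: "(X,Y) \<in> (Erel k ar)\<^sup>* \<Longrightarrow> is_struct ar X \<Longrightarrow> is_struct ar Y"
  by (induction rule: rtrancl_induct) (auto simp: Erel_def EQ_def)

lemma T2:
  assumes fin: "finite (UNIV :: 's set)" and sM: "is_struct (ar :: 's \<Rightarrow> nat) M'" and sN: "is_struct ar N'"
    and eq: "Th_inv k ar M' = Th_inv k ar N'"
  shows "(M', N') \<in> (Erel k ar)\<^sup>*"
proof (cases "okk ar k 0")
  case False
  then have k: "k = 0" and ns: "\<forall>s. ar s \<noteq> 0" unfolding okk_def by auto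
  obtain R where R: "lin_order (dom_of M') R" using exists_lin sM unfolding is_struct_def by blast
  obtain R' where R': "lin_order (dom_of N') R'" using exists_lin sN unfolding is_struct_def by blast
  have "[] \<notin> rel_of M' s" "[] \<notin> rel_of N' s" for s using sM sN ns unfolding is_struct_def by (metis list.size(3))+
  then have "pi M' R [] N' R' []" unfolding pi_def by auto
  then have "EQ k ar M' N'" unfolding EQ_def using sM sN R R' k by auto
  then show ?thesis unfolding Erel_def by blast
next
  case True
  define C where "C = {X. (M', X) \<in> (Erel k ar)\<^sup>*}"
  define T where "T = {hint ar k X R [] | X R. X \<in> C \<and> lin_order (dom_of X) R}"
  define chi where "chi = disjF T"
  have Cs: "X \<in> C \<Longrightarrow> is_struct ar X" for X unfolding C_def using Erel_struct sM by blast
  obtain R0 where R0: "lin_order (dom_of M') R0" using exists_lin sM unfolding is_struct_def by blast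
  have MC: "M' \<in> C" unfolding C_def by simp
  have "T \<subseteq> H ar k 0"
  proof
    fix p assume "p \<in> T"
    then obtain X :: "('s,nat) struct" and R where "p = hint ar k X R []" unfolding T_def by blast
    then show "p \<in> H ar k 0" using hint_in_H[of ar k X R "[]"] by simp
  qed
  then have fT: "finite T" using finite_subset finite_H[OF fin] by blast
  have neT: "T \<noteq> {}" using MC R0 unfolding T_def by blast
  have synT: "\<forall>p\<in>T. fv p \<subseteq> {} \<and> qr p \<le> k \<and> wf_fm ar p"
  proof
    fix p assume "p \<in> T"
    then obtain X :: "('s,nat) struct" and R where p: "p = hint ar k X R []" "X \<in> C" by (auto simp: T_def)
    have "is_struct ar X" using Cs p by blast
    then show "fv p \<subseteq> {} \<and> qr p \<le> k \<and> wf_fm ar p"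
      using hint_syn[OF fin, of X ar k "[]" R] True p unfolding is_struct_def by simp
  qed
  have syn: "sentence chi" "qr chi \<le> k" "wf_fm ar chi"
    unfolding chi_def sentence_def using disjF_fv[OF fT neT] disjF_qr[OF fT neT] disjF_wf[OF fT neT] synT by auto
  have inC: "X \<in> C" if sX: "is_struct ar X" and R1: "lin_order (dom_of X) R1" and h: "holds X R1 chi" for X R1
  proof -
    obtain a where a: "a \<in> dom_of X" using sX unfolding is_struct_def by blast
    have "eval X R1 (\<lambda>_. a) chi" using holds_iff[OF syn(1) a] h by simp
    then obtain p where "p \<in> T" "eval X R1 (\<lambda>_. a) p" using disjF_eval[OF fT neT] unfolding chi_def by blast
    then obtain Y :: "('s,nat) struct" and R where p: "p = hint ar k Y R []" "Y \<in> C" "lin_order (dom_of Y) R" "eval X R1 (\<lambda>_. a) (hint ar k Y R [])"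
      unfolding T_def by blast
    have sY: "is_struct ar Y" using Cs p by blast
    have "ef k Y R [] X R1 []" using hint_char[OF fin sY sX, of "[]" "[]" k "\<lambda>_. a" R1 R] p(4) True by simp
    then have "EQ k ar Y X" unfolding EQ_def using sX sY p(3) R1 by blast
    then have "(Y, X) \<in> Erel k ar" unfolding Erel_def by simp
    then show "X \<in> C" using p(2) unfolding C_def by simp
  qed
  have hC: "holds X R chi" if "X \<in> C" and R: "lin_order (dom_of X) R" for X R
  proof -
    have sX: "is_struct ar X" using Cs that by blast
    have "hint ar k X R [] \<in> T" using that unfolding T_def by blast
    moreover have "eval X R e (hint ar k X R [])" for e
      using hint_true[OF fin, of X ar k "[]" e R] sX True unfolding is_struct_def by simp
    ultimately have "eval X R e chi" for e using disjF_eval[OF fT neT] unfolding chi_def by blast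
    then show ?thesis unfolding holds_def by blast
  qed
  have oi: "ord_inv ar chi" unfolding ord_inv_def
  proof (intro allI impI)
    fix X :: "('s, nat) struct" and R1 R2
    assume sX: "is_struct ar X" and R1: "lin_order (dom_of X) R1" and R2: "lin_order (dom_of X) R2"
    show "holds X R1 chi = holds X R2 chi"
    proof
      assume "holds X R1 chi" then show "holds X R2 chi" using inC[OF sX R1] hC[OF _ R2] by simp
    next
      assume "holds X R2 chi" then show "holds X R1 chi" using inC[OF sX R2] hC[OF _ R1] by simp
    qed
  qed
  have "wf_fm ar chi \<and> sentence chi \<and> qr chi \<le> k \<and> ord_inv ar chi \<and> (\<exists>R. lin_order (dom_of M') R \<and> holds M' R chi)"
    using syn oi R0 hC[OF MC R0] by blast
  then have "chi \<in> Th_inv k ar M'" unfolding Th_inv_def by simp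
  then have "chi \<in> Th_inv k ar N'" using eq by simp
  then have "\<exists>R. lin_order (dom_of N') R \<and> holds N' R chi" unfolding Th_inv_def by simp
  then obtain R where "lin_order (dom_of N') R" "holds N' R chi" by blast
  then have "N' \<in> C" using inC[OF sN] by simp
  then show ?thesis unfolding C_def by simp
qed

lemma chain_du1: "(X,Y) \<in> (Erel k ar)\<^sup>* \<Longrightarrow> is_struct ar Z \<Longrightarrow>
   Th_inv k (ar_du ar) (disj_union X Z) = Th_inv k (ar_du ar) (disj_union Y Z)"
proof (induction rule: rtrancl_induct)
  case base then show ?case by simp
next
  case (step Y W)
  have "EQ k ar Y W" using step(2) unfolding Erel_def by simp
  then have "Th_inv k (ar_du ar) (disj_union Y Z) = Th_inv k (ar_du ar) (disj_union W Z)"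
    using EQ_du[OF \<open>EQ k ar Y W\<close> EQ_refl[OF step(4)]] by simp
  then show ?case using step by simp
qed

lemma chain_du2: "(X,Y) \<in> (Erel k ar)\<^sup>* \<Longrightarrow> is_struct ar Z \<Longrightarrow>
   Th_inv k (ar_du ar) (disj_union Z X) = Th_inv k (ar_du ar) (disj_union Z Y)"
proof (induction rule: rtrancl_induct)
  case base then show ?case by simp
next
  case (step Y W)
  have "EQ k ar Y W" using step(2) unfolding Erel_def by simp
  then have "Th_inv k (ar_du ar) (disj_union Z Y) = Th_inv k (ar_du ar) (disj_union Z W)"
    using EQ_du[OF EQ_refl[OF step(4)] \<open>EQ k ar Y W\<close>] by simp
  then show ?case using step by simp
qed

lemma chain_prod1: "(X,Y) \<in> (Erel k ar)\<^sup>* \<Longrightarrow> is_struct ar Z \<Longrightarrow>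
   Th_inv k ar (direct_prod X Z) = Th_inv k ar (direct_prod Y Z)"
proof (induction rule: rtrancl_induct)
  case base then show ?case by simp
next
  case (step Y W)
  have "EQ k ar Y W" using step(2) unfolding Erel_def by simp
  then have "Th_inv k ar (direct_prod Y Z) = Th_inv k ar (direct_prod W Z)"
    using EQ_prod[OF \<open>EQ k ar Y W\<close> EQ_refl[OF step(4)]] by simp
  then show ?case using step by simp
qed

lemma chain_prod2: "(X,Y) \<in> (Erel k ar)\<^sup>* \<Longrightarrow> is_struct ar Z \<Longrightarrow>
   Th_inv k ar (direct_prod Z X) = Th_inv k ar (direct_prod Z Y)"
proof (induction rule: rtrancl_induct)
  case base then show ?case by simp
next
  case (step Y W)
  have "EQ k ar Y W" using step(2) unfolding Erel_def by simp
  then have "Th_inv k ar (direct_prod Z Y) = Th_inv k ar (direct_prod Z W)"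
    using EQ_prod[OF EQ_refl[OF step(4)] \<open>EQ k ar Y W\<close>] by simp
  then show ?case using step by simp
qed

theorem theorem5p1:
  fixes k :: nat and ar :: "'s \<Rightarrow> nat"
    and A1 :: "('s, 'a) struct" and A2 :: "('s, 'b) struct"
    and B1 :: "('s, 'c) struct" and B2 :: "('s, 'd) struct"
  assumes "finite (UNIV :: 's set)"
    and "is_struct ar A1" and "is_struct ar A2"
    and "is_struct ar B1" and "is_struct ar B2"
    and "Th_inv k ar A1 = Th_inv k ar A2"
    and "Th_inv k ar B1 = Th_inv k ar B2"
  shows "Th_inv k (ar_du ar) (disj_union A1 B1) = Th_inv k (ar_du ar) (disj_union A2 B2)
       \<and> Th_inv k ar (direct_prod A1 B1) = Th_inv k ar (direct_prod A2 B2)"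
proof -
  obtain A1' :: "('s,nat) struct" where a1: "EQ k ar A1 A1'" using EQ_copy[OF assms(2)] by blast
  obtain A2' :: "('s,nat) struct" where a2: "EQ k ar A2 A2'" using EQ_copy[OF assms(3)] by blast
  obtain B1' :: "('s,nat) struct" where b1: "EQ k ar B1 B1'" using EQ_copy[OF assms(4)] by blast
  obtain B2' :: "('s,nat) struct" where b2: "EQ k ar B2 B2'" using EQ_copy[OF assms(5)] by blast
  have s: "is_struct ar A1'" "is_struct ar A2'" "is_struct ar B1'" "is_struct ar B2'"
    using a1 a2 b1 b2 unfolding EQ_def by auto
  have "Th_inv k ar A1' = Th_inv k ar A2'" using EQ_Th[OF a1] EQ_Th[OF a2] assms(6) by simp
  then have cA: "(A1', A2') \<in> (Erel k ar)\<^sup>*" using T2[OF assms(1) s(1) s(2)] by blast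
  have "Th_inv k ar B1' = Th_inv k ar B2'" using EQ_Th[OF b1] EQ_Th[OF b2] assms(7) by simp
  then have cB: "(B1', B2') \<in> (Erel k ar)\<^sup>*" using T2[OF assms(1) s(3) s(4)] by blast
  have "Th_inv k (ar_du ar) (disj_union A1 B1) = Th_inv k (ar_du ar) (disj_union A1' B1')" using EQ_du[OF a1 b1] .
  also have "\<dots> = Th_inv k (ar_du ar) (disj_union A2' B1')" using chain_du1[OF cA s(3)] .
  also have "\<dots> = Th_inv k (ar_du ar) (disj_union A2' B2')" using chain_du2[OF cB s(2)] .
  also have "\<dots> = Th_inv k (ar_du ar) (disj_union A2 B2)" using EQ_du[OF a2 b2] by simp
  finally have D: "Th_inv k (ar_du ar) (disj_union A1 B1) = Th_inv k (ar_du ar) (disj_union A2 B2)" .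
  have "Th_inv k ar (direct_prod A1 B1) = Th_inv k ar (direct_prod A1' B1')" using EQ_prod[OF a1 b1] .
  also have "\<dots> = Th_inv k ar (direct_prod A2' B1')" using chain_prod1[OF cA s(3)] .
  also have "\<dots> = Th_inv k ar (direct_prod A2' B2')" using chain_prod2[OF cB s(2)] .
  also have "\<dots> = Th_inv k ar (direct_prod A2 B2)" using EQ_prod[OF a2 b2] by simp
  finally have P: "Th_inv k ar (direct_prod A1 B1) = Th_inv k ar (direct_prod A2 B2)" .
  show ?thesis using D P by blast
qed

end
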